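(* Let $(X_1,X_2)$ be an extensible pair and $\gamma\in\mathcal H_2$. Then the following are equivalent: (i) $|\gamma|_{(X_1,X_2)}=0$; (ii) $\gamma^{(k)}\in Q(Z_k)$ for all sufficiently large $k$; (iii) $\gamma^{(k)}\in Q(Z_k)$ for infinitely many values of $k$.
   Context: Marked Dynkin diagram $(X,\xi)$: Dynkin diagram of a symmetrizable generalized Cartan matrix $C(X)$ with distinguished node $\xi$; $\det X=\det C(X)$; $X(-1)$ is $X$ minus $\xi$ ($\det\emptyset=1$); $\Delta_X=\det X-\det X(-1)$. $(X_1,X_2)$ is an extensible pair if $\det X_i\ne0$, $\Delta_i:=\Delta_{X_i}\ne0$, $\gcd(\det X_i,\Delta_i)=1$ ($i=1,2$), $\gcd(\Delta_1,\Delta_2)=1$. $Z_k$ is obtained from the disjoint union of $X_1$, a path $A_k$ (nodes $1,\dots,k$) and $X_2$ by adding simple edges $\xi_1$—$1$ and $k$—$\xi_2$; $\omega_p,\alpha_p$ are fundamental weights and simple roots of $\mathfrak g(Z_k)$, $Q(Z_k)$ the root lattice. Numberings: if $X$ has $d$ nodes, a numbering is a bijection $\epsilon:N(X)\to\{1,\dots,d\}$ with $\epsilon(\xi)=d$. $X(m)$ ($m\ge0$) is $X$ with a path of $m$ new nodes $\xi-1-2-\cdots-m$ attached at $\xi$, numbered by $j(p)=\epsilon(p)$ on $X$ and $j=d+t$ on the $t$-th new node; $\bar\omega^{(m)}$ is the fundamental weight of $\mathfrak g(X(m))$ at the node with $j=d+m$. For $X$ extensible ($\det X\ne0$, $\Delta_X\ne0$,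 $\gcd(\det X,\Delta_X)=1$) there is (by earlier work of Kleber and the author) a unique integer sequence $(a_i)_{i\ge1}$ such that for all $m\ge0$ with $\det X(m)\ne0$ and all $p\in X(m)$, $-\Delta_X\omega_p-a_{j(p)}\bar\omega^{(m)}\in Q(X(m))$. Fix numberings $\epsilon_1,\epsilon_2$ of $X_1,X_2$ ($d_i$ = number of nodes of $X_i$) and let $(a_i^{(1)}),(a_i^{(2)})$ be the corresponding sequences. On $Z_k$ define numberings $i,\bar\imath$: $i(p)=\epsilon_1(p)$ for $p\in X_1$, $i(p)=d_1+t$ for the $t$-th node of $A_k$, $i(p)=d_1+d_2+k+1-\epsilon_2(p)$ for $p\in X_2$; $\bar\imath(p)=\epsilon_2(p)$ for $p\in X_2$, $\bar\imath(p)=d_2+k+1-t$ for the $t$-th node of $A_k$, $\bar\imath(p)=d_1+d_2+k+1-\epsilon_1(p)$ for $p\in X_1$. $\mathcal H_1$ is the set of integer sequences $x=(x_1,x_2,\dots)$ with finitely many nonzero terms, $\ell(x)=\max\{i:x_i\ne0\}$; $\mathcal H_2=\mathcal H_1\times\mathcal H_1$. For $\gamma=(x,y)$: $\mathrm{ls}(\gamma)=\max(\ell(x),d_1)$, $\mathrm{rs}(\gamma)=\max(\ell(y),d_2)$, $\ell(\gamma)=\mathrm{ls}+\mathrm{rs}$, and for $k\ge\ell(\gamma)-d_1-d_2$, $\gamma^{(k)}=\sum_{p\in Z_k}(x_{i(p)}+y_{\bar\imath(p)})\omega_p$. The number of boxes is $|\gamma|_{(X_1,X_2)}=\Delta_2\sum_ix_ia_i^{(1)}-\Delta_1\sum_iy_ia_i^{(2)}$.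 *)

theory Defs
  imports Complex_Main "HOL-Combinatorics.Permutations"
begin

text \<open>A (marked) Dynkin diagram is represented by its generalized Cartan matrix
  C :: node => node => int on a finite node set N (the diagram determines the
  symmetrizable GCM and vice versa).\<close>

definition gcm :: "'n set \<Rightarrow> ('n \<Rightarrow> 'n \<Rightarrow> int) \<Rightarrow> bool" where
  "gcm N C \<longleftrightarrow> finite N \<and> (\<forall>i\<in>N. C i i = 2) \<and>
     (\<forall>i\<in>N. \<forall>j\<in>N. i \<noteq> j \<longrightarrow> C i j \<le> 0) \<and>
     (\<forall>i\<in>N. \<forall>j\<in>N. C i j = 0 \<longleftrightarrow> C j i = 0)"

definition symmetrizable :: "'n set \<Rightarrow> ('n \<Rightarrow> 'n \<Rightarrow> int) \<Rightarrow> bool" where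
  "symmetrizable N C \<longleftrightarrow> (\<exists>e :: 'n \<Rightarrow> real. (\<forall>i\<in>N. e i > 0) \<and>
     (\<forall>i\<in>N. \<forall>j\<in>N. e i * of_int (C i j) = e j * of_int (C j i)))"

definition sym_gcm :: "'n set \<Rightarrow> ('n \<Rightarrow> 'n \<Rightarrow> int) \<Rightarrow> bool" where
  "sym_gcm N C \<longleftrightarrow> gcm N C \<and> symmetrizable N C"

text \<open>Determinant (Leibniz formula) of the matrix restricted to the finite node set N;
  det of the empty diagram is 1.\<close>
definition mdet :: "'n set \<Rightarrow> ('n \<Rightarrow> 'n \<Rightarrow> int) \<Rightarrow> int" where
  "mdet N C = (\<Sum>\<sigma>\<in>{\<sigma>. \<sigma> permutes N}. sign \<sigma> * (\<Prod>p\<in>N. C p (\<sigma> p)))"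

definition Delta :: "'n set \<Rightarrow> ('n \<Rightarrow> 'n \<Rightarrow> int) \<Rightarrow> 'n \<Rightarrow> int" where
  "Delta N C \<xi> = mdet N C - mdet (N - {\<xi>}) C"

definition extensible :: "'n set \<Rightarrow> ('n \<Rightarrow> 'n \<Rightarrow> int) \<Rightarrow> 'n \<Rightarrow> bool" where
  "extensible N C \<xi> \<longleftrightarrow> mdet N C \<noteq> 0 \<and> Delta N C \<xi> \<noteq> 0 \<and>
     gcd (mdet N C) (Delta N C \<xi>) = 1"

text \<open>Weights are written in coordinates w.r.t. the fundamental weights omega_p
  (a function node => int). Kac's convention: alpha_q = sum_p C p q * omega_p.\<close>
definition in_root_lattice :: "'n set \<Rightarrow> ('n \<Rightarrow> 'n \<Rightarrow> int) \<Rightarrow> ('n \<Rightarrow> int) \<Rightarrow> bool" where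
  "in_root_lattice N C w \<longleftrightarrow> (\<exists>c :: 'n \<Rightarrow> int. \<forall>p\<in>N. w p = (\<Sum>q\<in>N. C p q * c q))"

definition fund_weight :: "'n \<Rightarrow> ('n \<Rightarrow> int)" where
  "fund_weight p = (\<lambda>q. if q = p then 1 else 0)"

definition path_entry :: "nat \<Rightarrow> nat \<Rightarrow> int" where
  "path_entry s t = (if s = t then 2 else if s = t + 1 \<or> t = s + 1 then -1 else 0)"

definition ext_nodes :: "'n set \<Rightarrow> nat \<Rightarrow> ('n + nat) set" where
  "ext_nodes N m = Inl ` N \<union> Inr ` {1..m}"

definition ext_mat :: "('n \<Rightarrow> 'n \<Rightarrow> int) \<Rightarrow> 'n \<Rightarrow> ('n + nat) \<Rightarrow> ('n + nat) \<Rightarrow> int" where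
  "ext_mat C \<xi> u v = (case (u, v) of
      (Inl p, Inl q) \<Rightarrow> C p q
    | (Inr s, Inr t) \<Rightarrow> path_entry s t
    | (Inl p, Inr t) \<Rightarrow> (if p = \<xi> \<and> t = 1 then -1 else 0)
    | (Inr s, Inl q) \<Rightarrow> (if q = \<xi> \<and> s = 1 then -1 else 0))"

definition ext_num :: "('n \<Rightarrow> nat) \<Rightarrow> nat \<Rightarrow> ('n + nat) \<Rightarrow> nat" where
  "ext_num \<epsilon> d u = (case u of Inl p \<Rightarrow> \<epsilon> p | Inr t \<Rightarrow> d + t)"

definition ext_top :: "'n \<Rightarrow> nat \<Rightarrow> ('n + nat)" where
  "ext_top \<xi> m = (if m = 0 then Inl \<xi> else Inr m)"

definition a_prop :: "'n set \<Rightarrow> ('n \<Rightarrow> 'n \<Rightarrow> int) \<Rightarrow> 'n \<Rightarrow> ('n \<Rightarrow> nat) \<Rightarrow> (nat \<Rightarrow> int) \<Rightarrow> bool" where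
  "a_prop N C \<xi> \<epsilon> a \<longleftrightarrow>
     (\<forall>m. mdet (ext_nodes N m) (ext_mat C \<xi>) \<noteq> 0 \<longrightarrow>
        (\<forall>p\<in>ext_nodes N m. in_root_lattice (ext_nodes N m) (ext_mat C \<xi>)
           (\<lambda>q. - Delta N C \<xi> * fund_weight p q
                - a (ext_num \<epsilon> (card N) p) * fund_weight (ext_top \<xi> m) q)))"

text \<open>The unique such sequence (index 0 is unused; normalised to 0).\<close>
definition a_seq :: "'n set \<Rightarrow> ('n \<Rightarrow> 'n \<Rightarrow> int) \<Rightarrow> 'n \<Rightarrow> ('n \<Rightarrow> nat) \<Rightarrow> (nat \<Rightarrow> int)" where
  "a_seq N C \<xi> \<epsilon> = (THE a. a_prop N C \<xi> \<epsilon> a \<and> a 0 = 0)"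

definition numbering :: "'n set \<Rightarrow> 'n \<Rightarrow> ('n \<Rightarrow> nat) \<Rightarrow> bool" where
  "numbering N \<xi> \<epsilon> \<longleftrightarrow> bij_betw \<epsilon> N {1..card N} \<and> \<epsilon> \<xi> = card N"

definition marked_diagram :: "'n set \<Rightarrow> ('n \<Rightarrow> 'n \<Rightarrow> int) \<Rightarrow> 'n \<Rightarrow> bool" where
  "marked_diagram N C \<xi> \<longleftrightarrow> sym_gcm N C \<and> \<xi> \<in> N"

definition extensible_pair ::
  "'a set \<Rightarrow> ('a \<Rightarrow> 'a \<Rightarrow> int) \<Rightarrow> 'a \<Rightarrow> 'b set \<Rightarrow> ('b \<Rightarrow> 'b \<Rightarrow> int) \<Rightarrow> 'b \<Rightarrow> bool" where
  "extensible_pair N1 C1 \<xi>1 N2 C2 \<xi>2 \<longleftrightarrow>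
     extensible N1 C1 \<xi>1 \<and> extensible N2 C2 \<xi>2 \<and> gcd (Delta N1 C1 \<xi>1) (Delta N2 C2 \<xi>2) = 1"

definition Z_nodes :: "'a set \<Rightarrow> 'b set \<Rightarrow> nat \<Rightarrow> (('a + nat) + 'b) set" where
  "Z_nodes N1 N2 k = Inl ` (Inl ` N1 \<union> Inr ` {1..k}) \<union> Inr ` N2"

definition Z_mat :: "('a \<Rightarrow> 'a \<Rightarrow> int) \<Rightarrow> 'a \<Rightarrow> ('b \<Rightarrow> 'b \<Rightarrow> int) \<Rightarrow> 'b \<Rightarrow> nat \<Rightarrow>
    (('a + nat) + 'b) \<Rightarrow> (('a + nat) + 'b) \<Rightarrow> int" where
  "Z_mat C1 \<xi>1 C2 \<xi>2 k u v = (case (u, v) of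
      (Inl u', Inl v') \<Rightarrow> ext_mat C1 \<xi>1 u' v'
    | (Inr p, Inr q) \<Rightarrow> C2 p q
    | (Inl (Inr t), Inr q) \<Rightarrow> (if t = k \<and> q = \<xi>2 then -1 else 0)
    | (Inr p, Inl (Inr t)) \<Rightarrow> (if t = k \<and> p = \<xi>2 then -1 else 0)
    | _ \<Rightarrow> 0)"

definition Z_num :: "('a \<Rightarrow> nat) \<Rightarrow> nat \<Rightarrow> ('b \<Rightarrow> nat) \<Rightarrow> nat \<Rightarrow> nat \<Rightarrow> (('a + nat) + 'b) \<Rightarrow> nat" where
  "Z_num \<epsilon>1 d1 \<epsilon>2 d2 k u = (case u of
      Inl (Inl p) \<Rightarrow> \<epsilon>1 p
    | Inl (Inr t) \<Rightarrow> d1 + t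
    | Inr q \<Rightarrow> d1 + d2 + k + 1 - \<epsilon>2 q)"

definition Z_numbar :: "('a \<Rightarrow> nat) \<Rightarrow> nat \<Rightarrow> ('b \<Rightarrow> nat) \<Rightarrow> nat \<Rightarrow> nat \<Rightarrow> (('a + nat) + 'b) \<Rightarrow> nat" where
  "Z_numbar \<epsilon>1 d1 \<epsilon>2 d2 k u = (case u of
      Inr q \<Rightarrow> \<epsilon>2 q
    | Inl (Inr t) \<Rightarrow> d2 + k + 1 - t
    | Inl (Inl p) \<Rightarrow> d1 + d2 + k + 1 - \<epsilon>1 p)"

text \<open>H_1: integer sequences indexed from 1 with finitely many nonzero terms
  (index 0 unused, required to be 0).\<close>
definition H1 :: "(nat \<Rightarrow> int) set" where
  "H1 = {x. finite {i. x i \<noteq> 0} \<and> x 0 = 0}"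

definition seq_len :: "(nat \<Rightarrow> int) \<Rightarrow> nat" where
  "seq_len x = Max (insert 0 {i. x i \<noteq> 0})"

definition gamma_len :: "nat \<Rightarrow> nat \<Rightarrow> (nat \<Rightarrow> int) \<Rightarrow> (nat \<Rightarrow> int) \<Rightarrow> nat" where
  "gamma_len d1 d2 x y = max (seq_len x) d1 + max (seq_len y) d2"

definition gamma_k :: "('a \<Rightarrow> nat) \<Rightarrow> nat \<Rightarrow> ('b \<Rightarrow> nat) \<Rightarrow> nat \<Rightarrow> (nat \<Rightarrow> int) \<Rightarrow> (nat \<Rightarrow> int)
    \<Rightarrow> nat \<Rightarrow> (('a + nat) + 'b) \<Rightarrow> int" where
  "gamma_k \<epsilon>1 d1 \<epsilon>2 d2 x y k p = x (Z_num \<epsilon>1 d1 \<epsilon>2 d2 k p) + y (Z_numbar \<epsilon>1 d1 \<epsilon>2 d2 k p)"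

definition boxes :: "'a set \<Rightarrow> ('a \<Rightarrow> 'a \<Rightarrow> int) \<Rightarrow> 'a \<Rightarrow> ('a \<Rightarrow> nat) \<Rightarrow>
    'b set \<Rightarrow> ('b \<Rightarrow> 'b \<Rightarrow> int) \<Rightarrow> 'b \<Rightarrow> ('b \<Rightarrow> nat) \<Rightarrow> (nat \<Rightarrow> int) \<Rightarrow> (nat \<Rightarrow> int) \<Rightarrow> int" where
  "boxes N1 C1 \<xi>1 \<epsilon>1 N2 C2 \<xi>2 \<epsilon>2 x y =
     Delta N2 C2 \<xi>2 * (\<Sum>i\<in>{i. x i \<noteq> 0}. x i * a_seq N1 C1 \<xi>1 \<epsilon>1 i)
   - Delta N1 C1 \<xi>1 * (\<Sum>i\<in>{i. y i \<noteq> 0}. y i * a_seq N2 C2 \<xi>2 \<epsilon>2 i)"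

end

theory Submission
  imports Defs "Jordan_Normal_Form.Determinant"
begin

lemma prod_dvd_two:
  fixes f :: "nat \<Rightarrow> 'a::comm_ring_1"
  assumes "finite I" "i1 \<in> I" "i2 \<in> I" "i1 \<noteq> i2" "dd dvd f i1" "dd dvd f i2"
  shows "dd * dd dvd (\<Prod>i\<in>I. f i)"
proof -
  have "(\<Prod>i\<in>I. f i) = f i1 * (\<Prod>i\<in>I - {i1}. f i)"
    using assms by (simp add: prod.remove)
  also have "(\<Prod>i\<in>I - {i1}. f i) = f i2 * (\<Prod>i\<in>I - {i1} - {i2}. f i)"
    using assms by (subst prod.remove[of _ i2]) auto
  finally have "(\<Prod>i\<in>I. f i) = (f i1 * f i2) * (\<Prod>i\<in>I - {i1} - {i2}. f i)"
    by (simp add: ac_simps)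
  moreover have "dd * dd dvd f i1 * f i2" using assms by (simp add: mult_dvd_mono)
  ultimately show ?thesis by simp
qed

lemma det_two_cols_dvd:
  fixes B :: "'a::comm_ring_1 mat"
  assumes B: "B \<in> carrier_mat n n" and a: "ia < n" and b: "ib < n" and ab: "ia \<noteq> ib"
    and da: "\<And>i. i < n \<Longrightarrow> dd dvd B $$ (i, ia)"
    and db: "\<And>i. i < n \<Longrightarrow> dd dvd B $$ (i, ib)"
  shows "dd * dd dvd det B"
proof -
  have "det B = (\<Sum>p\<in>{p. p permutes {0..<n}}. signof p * (\<Prod>i = 0..<n. B $$ (i, p i)))"
    by (rule det_def'[OF B])
  also have "dd * dd dvd \<dots>"
  proof (rule dvd_sum)
    fix p assume "p \<in> {p. p permutes {0..<n}}"
    hence p: "p permutes {0..<n}" by simp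
    let ?i1 = "Hilbert_Choice.inv p ia" and ?i2 = "Hilbert_Choice.inv p ib"
    have i1: "?i1 \<in> {0..<n}" "p ?i1 = ia"
      using a p by (auto simp: permutes_inv_eq permutes_in_image permutes_inverses(1) permutes_inv)
    have i2: "?i2 \<in> {0..<n}" "p ?i2 = ib"
      using b p by (auto simp: permutes_inverses(1) permutes_in_image permutes_inv)
    have ne: "?i1 \<noteq> ?i2" using i1 i2 ab by metis
    have "dd * dd dvd (\<Prod>i = 0..<n. B $$ (i, p i))"
      by (rule prod_dvd_two[OF _ i1(1) i2(1) ne]) (use i1 i2 da db in auto)
    thus "dd * dd dvd signof p * (\<Prod>i = 0..<n. B $$ (i, p i))" by simp
  qed
  finally show ?thesis .
qed

lemma mat_vec_col_adj:
  assumes A: "A \<in> carrier_mat n n" and j: "j < n"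
  shows "A *\<^sub>v col (adj_mat A) j = det A \<cdot>\<^sub>v unit_vec n j"
proof -
  have aA: "adj_mat A \<in> carrier_mat n n" using adj_mat[OF A] by simp
  have "A *\<^sub>v col (adj_mat A) j = col (A * adj_mat A) j"
    using A aA j by (simp add: col_mult2)
  also have "\<dots> = col (det A \<cdot>\<^sub>m 1\<^sub>m n) j" using adj_mat[OF A] by simp
  also have "\<dots> = det A \<cdot>\<^sub>v unit_vec n j"
    using j by (auto simp: col_def unit_vec_def)
  finally show ?thesis .
qed

lemma jacobi_dvd:
  fixes A :: "int mat"
  assumes A: "A \<in> carrier_mat n n" and xi: "xi < n" and q: "q < n" and p: "p < n" and qxi: "q \<noteq> xi"
  defines "D \<equiv> det A" and "M \<equiv> adj_mat A"
  shows "D * D dvd D * (M $$ (xi, xi) * (M $$ (xi, xi) * M $$ (q, p) - M $$ (xi, p) * M $$ (q, xi)))"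
proof -
  have aA: "M \<in> carrier_mat n n" using adj_mat[OF A] by (simp add: M_def)
  define x where "x = col M xi"
  define y where "y = col M p"
  have x: "x \<in> carrier_vec n" and y: "y \<in> carrier_vec n" using aA by (auto simp: x_def y_def)
  have Ax: "A *\<^sub>v x = D \<cdot>\<^sub>v unit_vec n xi" unfolding x_def M_def D_def by (rule mat_vec_col_adj[OF A xi])
  have Ay: "A *\<^sub>v y = D \<cdot>\<^sub>v unit_vec n p" unfolding y_def M_def D_def by (rule mat_vec_col_adj[OF A p])
  define z where "z = (x $ xi) \<cdot>\<^sub>v y - (y $ xi) \<cdot>\<^sub>v x"
  have z: "z \<in> carrier_vec n" using x y by (simp add: z_def)
  have zxi: "z $ xi = 0" using x y xi by (simp add: z_def)
  have zq: "z $ q = M $$ (xi, xi) * M $$ (q, p) - M $$ (xi, p) * M $$ (q, xi)"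
    using x y xi q p aA by (simp add: z_def x_def y_def)
  define A' where "A' = replace_col A (A *\<^sub>v x) xi"
  have A': "A' \<in> carrier_mat n n" using A by (simp add: A'_def replace_col_def)
  have detA': "det A' = x $ xi * D" unfolding A'_def D_def by (rule cramer_lemma_mat[OF A x xi])
  have A'z: "A' *\<^sub>v z = A *\<^sub>v z"
  proof (rule eq_vecI)
    fix i assume i: "i < dim_vec (A *\<^sub>v z)"
    hence i: "i < n" using A by simp
    have "(A' *\<^sub>v z) $ i = (\<Sum>k<n. A' $$ (i,k) * z $ k)"
      using A' z i by (simp add: mult_mat_vec_def scalar_prod_def lessThan_atLeast0)
    also have "\<dots> = (\<Sum>k<n. A $$ (i,k) * z $ k)"
      by (rule sum.cong) (use A i zxi in \<open>auto simp: A'_def replace_col_def\<close>)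
    also have "\<dots> = (A *\<^sub>v z) $ i"
      using A z i by (simp add: mult_mat_vec_def scalar_prod_def lessThan_atLeast0)
    finally show "(A' *\<^sub>v z) $ i = (A *\<^sub>v z) $ i" .
  qed (use A A' in auto)
  have Az: "(A *\<^sub>v z) $ i = x $ xi * (A *\<^sub>v y) $ i - y $ xi * (A *\<^sub>v x) $ i" if i: "i < n" for i
  proof -
    have "(A *\<^sub>v z) $ i = (\<Sum>k<n. A $$ (i,k) * (x $ xi * y $ k - y $ xi * x $ k))"
      using A z x y i by (simp add: mult_mat_vec_def scalar_prod_def lessThan_atLeast0 z_def)
    also have "\<dots> = x $ xi * (\<Sum>k<n. A $$ (i,k) * y $ k) - y $ xi * (\<Sum>k<n. A $$ (i,k) * x $ k)"
      by (simp add: sum_distrib_left sum_subtractf algebra_simps)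
    also have "\<dots> = x $ xi * (A *\<^sub>v y) $ i - y $ xi * (A *\<^sub>v x) $ i"
      using A x y i by (simp add: mult_mat_vec_def scalar_prod_def lessThan_atLeast0)
    finally show ?thesis .
  qed
  have dvdAz: "D dvd (A *\<^sub>v z) $ i" if "i < n" for i
    using that A unfolding Az[OF that] Ax Ay by simp
  have dvdAx: "D dvd (A *\<^sub>v x) $ i" if "i < n" for i
    using that A unfolding Ax by simp
  define B where "B = replace_col A' (A' *\<^sub>v z) q"
  have B: "B \<in> carrier_mat n n" using A' by (simp add: B_def replace_col_def)
  have detB: "det B = z $ q * det A'" unfolding B_def by (rule cramer_lemma_mat[OF A' z q])
  have "D * D dvd det B"
  proof (rule det_two_cols_dvd[OF B xi q qxi[symmetric]])
    fix i assume i: "i < n"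
    have "B $$ (i, xi) = (A *\<^sub>v x) $ i" using i A A' qxi xi q
      by (simp add: B_def A'_def replace_col_def)
    thus "D dvd B $$ (i, xi)" using dvdAx[OF i] by simp
    have "B $$ (i, q) = (A *\<^sub>v z) $ i" using i A A' q
      by (simp add: B_def replace_col_def A'z)
    thus "D dvd B $$ (i, q)" using dvdAz[OF i] by simp
  qed
  moreover have "x $ xi = M $$ (xi, xi)" using aA xi by (simp add: x_def)
  ultimately show ?thesis unfolding detB detA' zq by (simp add: ac_simps)
qed

lemma mdet_conv:
  fixes C :: "'n \<Rightarrow> 'n \<Rightarrow> int"
  assumes f: "bij_betw f {0..<n} S"
  shows "mdet S C = det (mat n n (\<lambda>(i,j). C (f i) (f j)))"
proof -
  let ?h = "map_permutation {0..<n} f"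
  let ?g = "inv_into {0..<n} f"
  have g: "bij_betw ?g S {0..<n}" using f by (rule bij_betw_inv_into)
  have gf: "\<And>x. x \<in> {0..<n} \<Longrightarrow> ?g (f x) = x" using f by (simp add: bij_betw_inv_into_left)
  have fg: "\<And>x. x \<in> S \<Longrightarrow> f (?g x) = x" using f by (simp add: bij_betw_inv_into_right)
  have injf: "inj_on f {0..<n}" using f by (simp add: bij_betw_def)
  have finS: "finite S" using f bij_betw_finite by blast
  have hb: "bij_betw ?h {p. p permutes {0..<n}} {p. p permutes S}"
  proof (rule bij_betw_byWitness[where f'="map_permutation S ?g"])
    show "\<forall>a\<in>{p. p permutes {0..<n}}. map_permutation S ?g (?h a) = a"
      using map_permutation_compose_inv[OF f _ gf] by auto
    show "\<forall>a'\<in>{p. p permutes S}. ?h (map_permutation S ?g a') = a'"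
      using map_permutation_compose_inv[OF g _ fg] by auto
    show "?h ` {p. p permutes {0..<n}} \<subseteq> {p. p permutes S}"
      using map_permutation_permutes[OF f] by auto
    show "map_permutation S ?g ` {p. p permutes S} \<subseteq> {p. p permutes {0..<n}}"
      using map_permutation_permutes[OF g] by auto
  qed
  have "mdet S C = (\<Sum>p\<in>{p. p permutes {0..<n}}. sign (?h p) * (\<Prod>x\<in>S. C x (?h p x)))"
    unfolding mdet_def by (rule sum.reindex_bij_betw[OF hb, symmetric])
  also have "\<dots> = (\<Sum>p\<in>{p. p permutes {0..<n}}. signof p * (\<Prod>i = 0..<n. C (f i) (f (p i))))"
  proof (rule sum.cong[OF refl])
    fix p assume "p \<in> {p. p permutes {0..<n}}"
    hence p: "p permutes {0..<n}" by simp
    have s: "sign (?h p) = sign p" by (rule sign_map_permutation[OF injf p]) simp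
    have "(\<Prod>x\<in>S. C x (?h p x)) = (\<Prod>i\<in>{0..<n}. C (f i) (?h p (f i)))"
      by (rule prod.reindex_bij_betw[OF f, symmetric])
    also have "\<dots> = (\<Prod>i = 0..<n. C (f i) (f (p i)))"
      by (rule prod.cong[OF refl]) (simp add: map_permutation_apply[OF injf])
    finally show "sign (?h p) * (\<Prod>x\<in>S. C x (?h p x)) = signof p * (\<Prod>i = 0..<n. C (f i) (f (p i)))"
      using s by simp
  qed
  also have "\<dots> = det (mat n n (\<lambda>(i,j). C (f i) (f j)))"
    by (subst det_def'[of _ n]) auto
  finally show ?thesis .
qed

lemma adj_exists:
  fixes C :: "'n \<Rightarrow> 'n \<Rightarrow> int"
  assumes finN: "finite N" and xiN: "\<xi> \<in> N"
  shows "\<exists>adj. (\<forall>p\<in>N. \<forall>r\<in>N. (\<Sum>q\<in>N. C p q * adj q r) = (if p = r then mdet N C else 0))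
    \<and> (\<forall>p\<in>N. \<forall>r\<in>N. (\<Sum>q\<in>N. adj p q * C q r) = (if p = r then mdet N C else 0))
    \<and> adj \<xi> \<xi> = mdet (N - {\<xi>}) C
    \<and> (\<forall>p\<in>N. \<forall>q\<in>N. mdet N C * mdet N C dvd
          mdet N C * (adj \<xi> \<xi> * (adj \<xi> \<xi> * adj q p - adj \<xi> p * adj q \<xi>)))"
proof -
  define n where "n = card N"
  have n0: "n > 0" using finN xiN by (auto simp: n_def card_gt_0_iff)
  obtain g where g: "bij_betw g {0..<n} N" using ex_bij_betw_nat_finite[OF finN] n_def by blast
  define i0 where "i0 = inv_into {0..<n} g \<xi>"
  have i0: "i0 \<in> {0..<n}" "g i0 = \<xi>" using g xiN
    by (auto simp: i0_def bij_betw_inv_into_right intro: inv_into_into[of \<xi> g] simp: bij_betw_def)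
  define f where "f = g \<circ> Transposition.transpose i0 (n - 1)"
  have tp: "Transposition.transpose i0 (n - 1) permutes {0..<n}"
    using i0 n0 by (intro permutes_swap_id) auto
  have f: "bij_betw f {0..<n} N" unfolding f_def
    by (rule bij_betw_trans[OF permutes_imp_bij[OF tp] g])
  have fn: "f (n - 1) = \<xi>" using i0 by (simp add: f_def)
  define A where "A = mat n n (\<lambda>(i,j). C (f i) (f j))"
  have A: "A \<in> carrier_mat n n" by (simp add: A_def)
  define D where "D = det A"
  have D: "mdet N C = D" unfolding D_def A_def by (rule mdet_conv[OF f])
  define M where "M = adj_mat A"
  have M: "M \<in> carrier_mat n n" using adj_mat[OF A] by (simp add: M_def)
  define fi where "fi = inv_into {0..<n} f"
  have fi: "\<And>u. u \<in> N \<Longrightarrow> fi u \<in> {0..<n} \<and> f (fi u) = u"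
    using f by (auto simp: fi_def bij_betw_inv_into_right intro: inv_into_into simp: bij_betw_def)
  have fif: "\<And>i. i \<in> {0..<n} \<Longrightarrow> fi (f i) = i" using f by (simp add: fi_def bij_betw_inv_into_left)
  define adj where "adj = (\<lambda>u v. M $$ (fi u, fi v))"
  have AM: "A * M = D \<cdot>\<^sub>m 1\<^sub>m n" "M * A = D \<cdot>\<^sub>m 1\<^sub>m n"
    using adj_mat[OF A] by (simp_all add: M_def D_def)
  have r1: "(\<Sum>q\<in>N. C p q * adj q r) = (if p = r then mdet N C else 0)" if p: "p \<in> N" and r: "r \<in> N" for p r
  proof -
    have "(\<Sum>q\<in>N. C p q * adj q r) = (\<Sum>k\<in>{0..<n}. C p (f k) * adj (f k) r)"
      by (rule sum.reindex_bij_betw[OF f, symmetric])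
    also have "\<dots> = (\<Sum>k\<in>{0..<n}. A $$ (fi p, k) * M $$ (k, fi r))"
      by (rule sum.cong[OF refl]) (use fi[OF p] fif in \<open>auto simp: A_def adj_def\<close>)
    also have "\<dots> = (A * M) $$ (fi p, fi r)"
      using A M fi[OF p] fi[OF r] by (simp add: times_mat_def scalar_prod_def)
    also have "\<dots> = (if p = r then mdet N C else 0)"
      using AM fi[OF p] fi[OF r] D by auto
    finally show ?thesis .
  qed
  have r2: "(\<Sum>q\<in>N. adj p q * C q r) = (if p = r then mdet N C else 0)" if p: "p \<in> N" and r: "r \<in> N" for p r
  proof -
    have "(\<Sum>q\<in>N. adj p q * C q r) = (\<Sum>k\<in>{0..<n}. adj p (f k) * C (f k) r)"
      by (rule sum.reindex_bij_betw[OF f, symmetric])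
    also have "\<dots> = (\<Sum>k\<in>{0..<n}. M $$ (fi p, k) * A $$ (k, fi r))"
      by (rule sum.cong[OF refl]) (use fi[OF r] fif in \<open>auto simp: A_def adj_def\<close>)
    also have "\<dots> = (M * A) $$ (fi p, fi r)"
      using A M fi[OF p] fi[OF r] by (simp add: times_mat_def scalar_prod_def)
    also have "\<dots> = (if p = r then mdet N C else 0)"
      using AM fi[OF p] fi[OF r] D by auto
    finally show ?thesis .
  qed
  have fixi: "fi \<xi> = n - 1" using fif[of "n - 1"] fn n0 by simp
  have r3: "adj \<xi> \<xi> = mdet (N - {\<xi>}) C"
  proof -
    have "adj \<xi> \<xi> = cofactor A (n - 1) (n - 1)"
      using fixi A n0 by (simp add: adj_def M_def adj_mat_def)
    also have "\<dots> = det (mat_delete A (n - 1) (n - 1))"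
      by (simp add: cofactor_def)
    also have "mat_delete A (n - 1) (n - 1) = mat (n - 1) (n - 1) (\<lambda>(i,j). C (f i) (f j))"
      using A by (auto simp: mat_delete_def A_def intro!: eq_matI)
    also have "det \<dots> = mdet (N - {\<xi>}) C"
    proof (rule mdet_conv[symmetric])
      show "bij_betw f {0..<n - 1} (N - {\<xi>})"
      proof (rule bij_betw_subset[OF f])
        show "{0..<n - 1} \<subseteq> {0..<n}" by auto
        have "f ` {0..<n - 1} = f ` ({0..<n} - {n - 1})" using n0 by auto
        also have "\<dots> = f ` {0..<n} - f ` {n - 1}"
          using f n0 by (intro inj_on_image_set_diff) (auto simp: bij_betw_def)
        also have "\<dots> = N - {\<xi>}" using f fn by (simp add: bij_betw_def)
        finally show "f ` {0..<n - 1} = N - {\<xi>}" .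
      qed
    qed
    finally show ?thesis .
  qed
  have r4: "mdet N C * mdet N C dvd mdet N C * (adj \<xi> \<xi> * (adj \<xi> \<xi> * adj q p - adj \<xi> p * adj q \<xi>))"
    if p: "p \<in> N" and q: "q \<in> N" for p q
  proof (cases "q = \<xi>")
    case True thus ?thesis by simp
  next
    case False
    have "fi q \<noteq> fi \<xi>" using False fi[OF q] fi[OF xiN] by metis
    from jacobi_dvd[OF A, of "fi \<xi>" "fi q" "fi p"] this fi[OF p] fi[OF q] fi[OF xiN]
    show ?thesis by (simp add: D adj_def M_def D_def)
  qed
  show ?thesis using r1 r2 r3 r4 by blast
qed

lemma ker_exists:
  fixes C :: "'n \<Rightarrow> 'n \<Rightarrow> int"
  assumes finN: "finite N" and d0: "mdet N C = 0"
  shows "\<exists>c. (\<exists>q\<in>N. c q \<noteq> 0) \<and> (\<forall>p\<in>N. (\<Sum>q\<in>N. C p q * c q) = 0)"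
proof -
  define n where "n = card N"
  obtain f where f: "bij_betw f {0..<n} N" using ex_bij_betw_nat_finite[OF finN] n_def by blast
  define A where "A = mat n n (\<lambda>(i,j). C (f i) (f j))"
  have A: "A \<in> carrier_mat n n" by (simp add: A_def)
  have "det A = 0" using d0 mdet_conv[OF f, of C] by (simp add: A_def)
  then obtain v where v: "v \<in> carrier_vec n" "v \<noteq> 0\<^sub>v n" "A *\<^sub>v v = 0\<^sub>v n"
    using det_0_iff_vec_prod_zero[OF A] by blast
  define fi where "fi = inv_into {0..<n} f"
  have fi: "\<And>u. u \<in> N \<Longrightarrow> fi u \<in> {0..<n} \<and> f (fi u) = u"
    using f by (auto simp: fi_def bij_betw_inv_into_right intro: inv_into_into simp: bij_betw_def)
  have fif: "\<And>i. i \<in> {0..<n} \<Longrightarrow> fi (f i) = i" using f by (simp add: fi_def bij_betw_inv_into_left)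
  define c where "c = (\<lambda>u. v $ fi u)"
  obtain i where i: "i < n" "v $ i \<noteq> 0" using v(1,2) by (metis eq_vecI carrier_vecD index_zero_vec)
  have fiN: "f i \<in> N" using f i by (auto simp: bij_betw_def)
  have "c (f i) \<noteq> 0" using i fif by (simp add: c_def)
  moreover have "(\<Sum>q\<in>N. C p q * c q) = 0" if p: "p \<in> N" for p
  proof -
    have "(\<Sum>q\<in>N. C p q * c q) = (\<Sum>k\<in>{0..<n}. C p (f k) * c (f k))"
      by (rule sum.reindex_bij_betw[OF f, symmetric])
    also have "\<dots> = (\<Sum>k\<in>{0..<n}. A $$ (fi p, k) * v $ k)"
      by (rule sum.cong[OF refl]) (use fi[OF p] fif in \<open>auto simp: A_def c_def\<close>)
    also have "\<dots> = (A *\<^sub>v v) $ fi p"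
      using A v(1) fi[OF p] by (simp add: mult_mat_vec_def scalar_prod_def)
    also have "\<dots> = 0" by (subst v(3)) (use fi[OF p] in simp)
    finally show ?thesis .
  qed
  ultimately show ?thesis using fiN by blast
qed

definition adjprops :: "'n set \<Rightarrow> ('n \<Rightarrow> 'n \<Rightarrow> int) \<Rightarrow> 'n \<Rightarrow> ('n \<Rightarrow> 'n \<Rightarrow> int) \<Rightarrow> bool" where
  "adjprops N C \<xi> adj \<longleftrightarrow> (\<forall>p\<in>N. \<forall>r\<in>N. (\<Sum>q\<in>N. C p q * adj q r) = (if p = r then mdet N C else 0))
    \<and> (\<forall>p\<in>N. \<forall>r\<in>N. (\<Sum>q\<in>N. adj p q * C q r) = (if p = r then mdet N C else 0))
    \<and> adj \<xi> \<xi> = mdet (N - {\<xi>}) C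
    \<and> (\<forall>p\<in>N. \<forall>q\<in>N. mdet N C * mdet N C dvd
          mdet N C * (adj \<xi> \<xi> * (adj \<xi> \<xi> * adj q p - adj \<xi> p * adj q \<xi>)))"

lemma adjprops_exists: "finite N \<Longrightarrow> \<xi> \<in> N \<Longrightarrow> \<exists>adj. adjprops N C \<xi> adj"
  unfolding adjprops_def by (rule adj_exists)

lemma A1:
  assumes ap: "adjprops N C \<xi> adj" and fin: "finite N" and xi: "\<xi> \<in> N"
    and v: "\<forall>p\<in>N. v p = (\<Sum>q\<in>N. C p q * c q)"
  shows "mdet N C * c \<xi> = (\<Sum>p\<in>N. adj \<xi> p * v p)"
proof -
  have "(\<Sum>p\<in>N. adj \<xi> p * v p) = (\<Sum>p\<in>N. \<Sum>q\<in>N. adj \<xi> p * C p q * c q)"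
    using v by (simp add: sum_distrib_left mult.assoc)
  also have "\<dots> = (\<Sum>q\<in>N. (\<Sum>p\<in>N. adj \<xi> p * C p q) * c q)"
    by (subst sum.swap) (simp add: sum_distrib_right)
  also have "\<dots> = (\<Sum>q\<in>N. (if \<xi> = q then mdet N C * c q else 0))"
    using ap xi unfolding adjprops_def by (intro sum.cong) auto
  also have "\<dots> = mdet N C * c \<xi>" using fin xi by simp
  finally show ?thesis by simp
qed

lemma A2:
  assumes ap: "adjprops N C \<xi> adj" and fin: "finite N" and xi: "\<xi> \<in> N"
    and D0: "mdet N C \<noteq> 0" and cop: "coprime (mdet N C) (mdet (N - {\<xi>}) C)"
    and dv: "mdet N C dvd (\<Sum>p\<in>N. adj \<xi> p * v p)"
  shows "\<exists>c. \<forall>p\<in>N. v p = (\<Sum>q\<in>N. C p q * c q)"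
proof -
  define D where "D = mdet N C"
  define D' where "D' = mdet (N - {\<xi>}) C"
  have aD': "adj \<xi> \<xi> = D'" using ap by (simp add: adjprops_def D'_def)
  define u where "u = (\<lambda>q. \<Sum>p\<in>N. adj q p * v p)"
  have du: "D dvd u q" if q: "q \<in> N" for q
  proof -
    have J: "D dvd D' * adj q p - adj \<xi> p * adj q \<xi>" if p: "p \<in> N" for p
    proof -
      have "D * D dvd D * (D' * (D' * adj q p - adj \<xi> p * adj q \<xi>))"
        using ap p q aD' unfolding adjprops_def D_def by auto
      hence "D dvd D' * (D' * adj q p - adj \<xi> p * adj q \<xi>)"
        using D0 by (simp add: D_def)
      thus ?thesis using cop by (simp add: D_def D'_def coprime_dvd_mult_right_iff)
    qed
    have "D' * u q - adj q \<xi> * (\<Sum>p\<in>N. adj \<xi> p * v p) = (\<Sum>p\<in>N. (D' * adj q p - adj \<xi> p * adj q \<xi>) * v p)"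
      by (simp add: u_def sum_distrib_left sum_subtractf algebra_simps)
    also have "D dvd \<dots>" using J by (intro dvd_sum) auto
    finally have "D dvd D' * u q - adj q \<xi> * (\<Sum>p\<in>N. adj \<xi> p * v p)" .
    moreover have "D dvd adj q \<xi> * (\<Sum>p\<in>N. adj \<xi> p * v p)" using dv by (simp add: D_def)
    ultimately have "D dvd D' * u q" using dvd_add by fastforce
    thus ?thesis using cop by (simp add: D_def D'_def coprime_dvd_mult_right_iff)
  qed
  define c where "c = (\<lambda>q. u q div D)"
  have Dc: "D * c q = u q" if "q \<in> N" for q using du[OF that] by (simp add: c_def)
  have "v p = (\<Sum>q\<in>N. C p q * c q)" if p: "p \<in> N" for p
  proof -
    have "D * (\<Sum>q\<in>N. C p q * c q) = (\<Sum>q\<in>N. C p q * (D * c q))"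
      by (simp add: sum_distrib_left ac_simps)
    also have "\<dots> = (\<Sum>q\<in>N. C p q * u q)"
      by (rule sum.cong) (auto simp: Dc)
    also have "\<dots> = (\<Sum>r\<in>N. (\<Sum>q\<in>N. C p q * adj q r) * v r)"
      unfolding u_def by (simp add: sum_distrib_left sum_distrib_right mult.assoc) (rule sum.swap)
    also have "\<dots> = (\<Sum>r\<in>N. (if p = r then D * v r else 0))"
      using ap p unfolding adjprops_def D_def by (intro sum.cong) auto
    also have "\<dots> = D * v p" using fin p by simp
    finally show ?thesis using D0 by (simp add: D_def)
  qed
  thus ?thesis by blast
qed

lemma R_iff:
  assumes ap: "adjprops N C \<xi> adj" and fin: "finite N" and xi: "\<xi> \<in> N"
    and D0: "mdet N C \<noteq> 0" and cop: "coprime (mdet N C) (mdet (N - {\<xi>}) C)"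
  shows "(\<exists>c. (\<forall>p\<in>N. v p = (\<Sum>q\<in>N. C p q * c q)) \<and> c \<xi> = z)
     \<longleftrightarrow> mdet N C * z = (\<Sum>p\<in>N. adj \<xi> p * v p)"
proof
  assume "\<exists>c. (\<forall>p\<in>N. v p = (\<Sum>q\<in>N. C p q * c q)) \<and> c \<xi> = z"
  then obtain c where "\<forall>p\<in>N. v p = (\<Sum>q\<in>N. C p q * c q)" "c \<xi> = z" by blast
  thus "mdet N C * z = (\<Sum>p\<in>N. adj \<xi> p * v p)" using A1[OF ap fin xi] by blast
next
  assume h: "mdet N C * z = (\<Sum>p\<in>N. adj \<xi> p * v p)"
  hence "mdet N C dvd (\<Sum>p\<in>N. adj \<xi> p * v p)" by (metis dvd_triv_left)
  then obtain c where c: "\<forall>p\<in>N. v p = (\<Sum>q\<in>N. C p q * c q)" using A2[OF ap fin xi D0 cop] by blast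
  have "mdet N C * c \<xi> = mdet N C * z" using A1[OF ap fin xi c] h by simp
  hence "c \<xi> = z" using D0 by simp
  thus "\<exists>c. (\<forall>p\<in>N. v p = (\<Sum>q\<in>N. C p q * c q)) \<and> c \<xi> = z" using c by blast
qed

definition FF :: "(nat \<Rightarrow> int) \<Rightarrow> nat \<Rightarrow> nat \<Rightarrow> int" where
  "FF w k t = (\<Sum>r\<in>{t<..k}. (int r - int t) * w r)"

lemma FF_rec:
  assumes "1 \<le> t" "t \<le> k"
  shows "FF w k (t - 1) + FF w k (Suc t) = 2 * FF w k t + w t"
proof -
  define S where "S = (\<Sum>r\<in>{t<..k}. w r)"
  have e1: "{t - 1<..k} = insert t {t<..k}" using assms by auto
  have "FF w k (t - 1) = w t + (\<Sum>r\<in>{t<..k}. (int r - int (t - 1)) * w r)"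
    unfolding FF_def e1 using assms by (subst sum.insert) auto
  also have "(\<Sum>r\<in>{t<..k}. (int r - int (t - 1)) * w r) = FF w k t + S"
    unfolding FF_def S_def using assms by (simp add: sum.distrib[symmetric] algebra_simps of_nat_diff)
  finally have a: "FF w k (t - 1) = w t + FF w k t + S" by simp
  have b: "FF w k (Suc t) = FF w k t - S"
  proof (cases "t < k")
    case True
    have e2: "{t<..k} = insert (Suc t) {Suc t<..k}" using True by auto
    have "FF w k t - S = (\<Sum>r\<in>{t<..k}. (int r - int t - 1) * w r)"
      unfolding FF_def S_def by (simp add: sum_subtractf[symmetric] algebra_simps)
    also have "\<dots> = (\<Sum>r\<in>{Suc t<..k}. (int r - int t - 1) * w r)"
      unfolding e2 by (subst sum.insert) auto
    also have "\<dots> = FF w k (Suc t)" unfolding FF_def by (simp add: algebra_simps)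
    finally show ?thesis by simp
  next
    case False
    hence "{t<..k} = {}" "{Suc t<..k} = {}" by auto
    thus ?thesis by (simp add: FF_def S_def)
  qed
  show ?thesis using a b by simp
qed

definition chainv :: "(nat \<Rightarrow> int) \<Rightarrow> nat \<Rightarrow> int \<Rightarrow> int \<Rightarrow> nat \<Rightarrow> int" where
  "chainv w k s u t = (int (Suc k) - int t) * s - (int k - int t) * u - FF w k t"

lemma chain_bwd:
  assumes "1 \<le> t" "t \<le> k"
  shows "w t = 2 * chainv w k s u t - chainv w k s u (t - 1) - chainv w k s u (Suc t)"
  using FF_rec[OF assms, of w] assms unfolding chainv_def by (simp add: of_nat_diff algebra_simps)

lemma chainv_k: "chainv w k s u k = s" "chainv w k s u (Suc k) = u"
  by (simp_all add: chainv_def FF_def)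

lemma chain_fwd:
  assumes rec: "\<forall>t\<in>{1..k}. w t = 2 * cc t - cc (t - 1) - cc (Suc t)"
    and t: "t \<le> Suc k"
  shows "cc t = chainv w k (cc k) (cc (Suc k)) t"
proof -
  have main: "cc (k - i) = chainv w k (cc k) (cc (Suc k)) (k - i) \<and>
              cc (Suc k - i) = chainv w k (cc k) (cc (Suc k)) (Suc k - i)" if "i \<le> k" for i
    using that
  proof (induction i)
    case 0 thus ?case by (simp add: chainv_k)
  next
    case (Suc i)
    hence IH: "cc (k - i) = chainv w k (cc k) (cc (Suc k)) (k - i)"
              "cc (Suc k - i) = chainv w k (cc k) (cc (Suc k)) (Suc k - i)" by auto
    define t where "t = k - i"
    have t1: "1 \<le> t" "t \<le> k" using Suc.prems by (auto simp: t_def)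
    have e: "k - Suc i = t - 1" "Suc k - Suc i = t" "Suc k - i = Suc t" using Suc.prems by (auto simp: t_def)
    have "cc (t - 1) = 2 * cc t - cc (Suc t) - w t" using rec t1 by auto
    also have "\<dots> = chainv w k (cc k) (cc (Suc k)) (t - 1)"
      using IH chain_bwd[OF t1, of w "cc k" "cc (Suc k)"] unfolding t_def[symmetric] e by simp
    finally show ?case using IH unfolding e t_def[symmetric] by simp
  qed
  show ?thesis
  proof (cases "t = Suc k")
    case True thus ?thesis by (simp add: chainv_k)
  next
    case False
    hence "t = k - (k - t)" "k - t \<le> k" using t by auto
    thus ?thesis using main[of "k - t"] by metis
  qed
qed

lemma path_sum:
  assumes t: "t \<in> {1..m}"
  shows "(\<Sum>s\<in>{1..m}. path_entry t s * g s) =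
    2 * g t - (if 1 < t then g (t - 1) else 0) - (if t < m then g (Suc t) else 0)"
proof -
  have "(\<Sum>s\<in>{1..m}. path_entry t s * g s) =
        (\<Sum>s\<in>{1..m}. (if s = t then 2 * g s else 0) - (if s = t - 1 then (if 1 < t then g s else 0) else 0)
            - (if s = Suc t then g s else 0))"
    by (rule sum.cong[OF refl]) (use t in \<open>auto simp: path_entry_def\<close>)
  also have "\<dots> = (\<Sum>s\<in>{1..m}. (if s = t then 2 * g s else 0)) - (\<Sum>s\<in>{1..m}. (if s = t - 1 then (if 1 < t then g s else 0) else 0))
            - (\<Sum>s\<in>{1..m}. (if s = Suc t then g s else 0))"
    by (simp add: sum_subtractf)
  also have "(\<Sum>s\<in>{1..m}. (if s = t - 1 then (if 1 < t then g s else 0) else 0)) = (if 1 < t then g (t - 1) else 0)"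
    by (cases "1 < t") (use t in \<open>auto simp: sum.delta\<close>)
  also have "(\<Sum>s\<in>{1..m}. (if s = t then 2 * g s else 0)) = 2 * g t" using t by (simp add: sum.delta)
  also have "(\<Sum>s\<in>{1..m}. (if s = Suc t then g s else 0)) = (if t < m then g (Suc t) else 0)"
    using t by (simp add: sum.delta)
  finally show ?thesis .
qed

lemma sum_ext:
  assumes "finite N"
  shows "(\<Sum>q\<in>ext_nodes N m. f q) = (\<Sum>q\<in>N. f (Inl q)) + (\<Sum>t\<in>{1..m}. f (Inr t))"
proof -
  have "(\<Sum>q\<in>ext_nodes N m. f q) = (\<Sum>q\<in>Inl ` N. f q) + (\<Sum>q\<in>Inr ` {1..m}. f q)"
    unfolding ext_nodes_def using assms by (intro sum.union_disjoint) auto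
  also have "\<dots> = (\<Sum>q\<in>N. f (Inl q)) + (\<Sum>t\<in>{1..m}. f (Inr t))"
    by (simp add: sum.reindex)
  finally show ?thesis .
qed

definition ccX :: "('n + nat \<Rightarrow> int) \<Rightarrow> 'n \<Rightarrow> nat \<Rightarrow> nat \<Rightarrow> int" where
  "ccX c \<xi> m t = (if t = 0 then c (Inl \<xi>) else if t \<le> m then c (Inr t) else 0)"

lemma ext_row_Inl:
  assumes "finite N" "p \<in> N"
  shows "(\<Sum>q\<in>ext_nodes N m. ext_mat C \<xi> (Inl p) q * c q) =
     (\<Sum>q\<in>N. C p q * c (Inl q)) - (if p = \<xi> then ccX c \<xi> m 1 else 0)"
proof -
  have "(\<Sum>t\<in>{1..m}. ext_mat C \<xi> (Inl p) (Inr t) * c (Inr t)) =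
        (\<Sum>t\<in>{1..m}. if t = 1 then (if p = \<xi> then - c (Inr t) else 0) else 0)"
    by (rule sum.cong[OF refl]) (auto simp: ext_mat_def)
  also have "\<dots> = - (if p = \<xi> then ccX c \<xi> m 1 else 0)"
    by (simp add: sum.delta ccX_def)
  finally show ?thesis using assms by (simp add: sum_ext ext_mat_def)
qed

lemma ext_row_Inr:
  assumes "finite N" "\<xi> \<in> N" and t: "t \<in> {1..m}"
  shows "(\<Sum>q\<in>ext_nodes N m. ext_mat C \<xi> (Inr t) q * c q) =
     2 * ccX c \<xi> m t - ccX c \<xi> m (t - 1) - ccX c \<xi> m (Suc t)"
proof -
  have "(\<Sum>q\<in>N. ext_mat C \<xi> (Inr t) (Inl q) * c (Inl q)) =
        (\<Sum>q\<in>N. if q = \<xi> then (if t = 1 then - c (Inl q) else 0) else 0)"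
    by (rule sum.cong[OF refl]) (auto simp: ext_mat_def)
  also have "\<dots> = (if t = 1 then - c (Inl \<xi>) else 0)" using assms by (simp add: sum.delta)
  finally have a: "(\<Sum>q\<in>N. ext_mat C \<xi> (Inr t) (Inl q) * c (Inl q)) = (if t = 1 then - c (Inl \<xi>) else 0)" .
  have "(\<Sum>s\<in>{1..m}. ext_mat C \<xi> (Inr t) (Inr s) * c (Inr s)) = (\<Sum>s\<in>{1..m}. path_entry t s * c (Inr s))"
    by (simp add: ext_mat_def)
  also have "\<dots> = 2 * c (Inr t) - (if 1 < t then c (Inr (t - 1)) else 0) - (if t < m then c (Inr (Suc t)) else 0)"
    by (rule path_sum[OF t])
  finally have b: "(\<Sum>s\<in>{1..m}. ext_mat C \<xi> (Inr t) (Inr s) * c (Inr s)) =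
     2 * c (Inr t) - (if 1 < t then c (Inr (t - 1)) else 0) - (if t < m then c (Inr (Suc t)) else 0)" .
  show ?thesis using t unfolding sum_ext[OF assms(1)] a b by (auto simp: ccX_def)
qed

lemma FF_0: "FF w m 0 = (\<Sum>t\<in>{1..m}. int t * w t)"
proof -
  have "{0<..m} = {1..m}" by auto
  thus ?thesis by (simp add: FF_def)
qed

lemma FF_1: "FF w m 1 = (\<Sum>t\<in>{1..m}. (int t - 1) * w t)"
proof (cases "m = 0")
  case True thus ?thesis by (simp add: FF_def)
next
  case False
  have "{1..m} = insert 1 {1<..m}" using False by auto
  thus ?thesis by (simp add: FF_def)
qed

lemma key_alg:
  fixes D D' s :: int
  shows "D * chainv w m s 0 0 - D' * chainv w m s 0 1 =
     s * (D + int m * (D - D')) - (\<Sum>t\<in>{1..m}. (D' + int t * (D - D')) * w t)"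
proof -
  have "D * chainv w m s 0 0 - D' * chainv w m s 0 1 =
        s * (D + int m * (D - D')) - (D * FF w m 0 - D' * FF w m 1)"
    by (simp add: chainv_def algebra_simps)
  also have "D * FF w m 0 - D' * FF w m 1 = (\<Sum>t\<in>{1..m}. (D' + int t * (D - D')) * w t)"
    unfolding FF_0 FF_1 by (simp add: sum_distrib_left sum_subtractf[symmetric] algebra_simps)
  finally show ?thesis .
qed

definition awX :: "'n set \<Rightarrow> ('n \<Rightarrow> 'n \<Rightarrow> int) \<Rightarrow> 'n \<Rightarrow> ('n \<Rightarrow> 'n \<Rightarrow> int) \<Rightarrow> nat \<Rightarrow> ('n + nat \<Rightarrow> int) \<Rightarrow> int" where
  "awX N C \<xi> adj m w = (\<Sum>p\<in>N. adj \<xi> p * w (Inl p))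
     + (\<Sum>t\<in>{1..m}. (mdet (N - {\<xi>}) C + int t * Delta N C \<xi>) * w (Inr t))"

definition eqsX :: "'n set \<Rightarrow> ('n \<Rightarrow> 'n \<Rightarrow> int) \<Rightarrow> 'n \<Rightarrow> nat \<Rightarrow> ('n + nat \<Rightarrow> int) \<Rightarrow> ('n + nat \<Rightarrow> int) \<Rightarrow> bool" where
  "eqsX N C \<xi> m w c \<longleftrightarrow> (\<forall>u\<in>ext_nodes N m. w u = (\<Sum>q\<in>ext_nodes N m. ext_mat C \<xi> u q * c q))"

lemma XM_fwd_aux:
  assumes ap: "adjprops N C \<xi> adj" and fin: "finite N" and xi: "\<xi> \<in> N"
    and eq: "eqsX N C \<xi> m w c"
  shows "(\<forall>t\<le>Suc m. ccX c \<xi> m t = chainv (\<lambda>t. w (Inr t)) m (c (ext_top \<xi> m)) 0 t)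
     \<and> (\<forall>p\<in>N. w (Inl p) + (if p = \<xi> then ccX c \<xi> m 1 else 0) = (\<Sum>q\<in>N. C p q * c (Inl q)))"
proof -
  let ?cc = "ccX c \<xi> m"
  have rec: "\<forall>t\<in>{1..m}. w (Inr t) = 2 * ?cc t - ?cc (t - 1) - ?cc (Suc t)"
  proof
    fix t assume t: "t \<in> {1..m}"
    hence "Inr t \<in> ext_nodes N m" by (simp add: ext_nodes_def)
    thus "w (Inr t) = 2 * ?cc t - ?cc (t - 1) - ?cc (Suc t)"
      using eq ext_row_Inr[OF fin xi t] unfolding eqsX_def by simp
  qed
  have top: "?cc m = c (ext_top \<xi> m)" by (simp add: ccX_def ext_top_def)
  have cs: "?cc (Suc m) = 0" by (simp add: ccX_def)
  have 1: "\<forall>t\<le>Suc m. ?cc t = chainv (\<lambda>t. w (Inr t)) m (c (ext_top \<xi> m)) 0 t"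
    using chain_fwd[OF rec] top cs by metis
  have 2: "\<forall>p\<in>N. w (Inl p) + (if p = \<xi> then ?cc 1 else 0) = (\<Sum>q\<in>N. C p q * c (Inl q))"
  proof
    fix p assume p: "p \<in> N"
    hence "Inl p \<in> ext_nodes N m" by (simp add: ext_nodes_def)
    thus "w (Inl p) + (if p = \<xi> then ?cc 1 else 0) = (\<Sum>q\<in>N. C p q * c (Inl q))"
      using eq ext_row_Inl[OF fin p, of C \<xi> c m] unfolding eqsX_def by simp
  qed
  show ?thesis using 1 2 by blast
qed

lemma XM:
  assumes ap: "adjprops N C \<xi> adj" and fin: "finite N" and xi: "\<xi> \<in> N"
    and D0: "mdet N C \<noteq> 0" and cop: "coprime (mdet N C) (mdet (N - {\<xi>}) C)"
  shows "(\<exists>c. eqsX N C \<xi> m w c \<and> c (ext_top \<xi> m) = s)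
     \<longleftrightarrow> s * (mdet N C + int m * Delta N C \<xi>) = awX N C \<xi> adj m w"
proof -
  define D where "D = mdet N C"
  define D' where "D' = mdet (N - {\<xi>}) C"
  have Dl: "Delta N C \<xi> = D - D'" by (simp add: Delta_def D_def D'_def)
  have aD': "adj \<xi> \<xi> = D'" using ap by (simp add: adjprops_def D'_def)
  let ?wp = "\<lambda>t. w (Inr t)"
  define nu where "nu = (\<Sum>p\<in>N. adj \<xi> p * w (Inl p))"
  have aw: "awX N C \<xi> adj m w = nu + (\<Sum>t\<in>{1..m}. (D' + int t * (D - D')) * ?wp t)"
    by (simp add: awX_def nu_def Dl D'_def)
  have nuv: "(\<Sum>p\<in>N. adj \<xi> p * (w (Inl p) + (if p = \<xi> then z else 0))) = nu + D' * z" for z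
  proof -
    have "(\<Sum>p\<in>N. adj \<xi> p * (w (Inl p) + (if p = \<xi> then z else 0))) =
          (\<Sum>p\<in>N. adj \<xi> p * w (Inl p)) + (\<Sum>p\<in>N. if p = \<xi> then adj \<xi> p * z else 0)"
      by (subst sum.distrib[symmetric]) (rule sum.cong, auto simp: algebra_simps)
    also have "(\<Sum>p\<in>N. if p = \<xi> then adj \<xi> p * z else 0) = D' * z" using fin xi aD' by simp
    finally show ?thesis by (simp add: nu_def)
  qed
  have KA: "D * chainv ?wp m s 0 0 - D' * chainv ?wp m s 0 1 =
     s * (D + int m * (D - D')) - (\<Sum>t\<in>{1..m}. (D' + int t * (D - D')) * ?wp t)"
    by (rule key_alg)
  show ?thesis
  proof
    assume "\<exists>c. eqsX N C \<xi> m w c \<and> c (ext_top \<xi> m) = s"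
    then obtain c where eq: "eqsX N C \<xi> m w c" and cs: "c (ext_top \<xi> m) = s" by blast
    note F = XM_fwd_aux[OF ap fin xi eq]
    have c0: "ccX c \<xi> m 0 = chainv ?wp m s 0 0" and c1: "ccX c \<xi> m 1 = chainv ?wp m s 0 1"
      using F cs by auto
    have "D * c (Inl \<xi>) = (\<Sum>p\<in>N. adj \<xi> p * (w (Inl p) + (if p = \<xi> then ccX c \<xi> m 1 else 0)))"
      unfolding D_def by (rule A1[OF ap fin xi]) (use F in auto)
    hence "D * chainv ?wp m s 0 0 = nu + D' * chainv ?wp m s 0 1"
      using c0 c1 nuv by (simp add: ccX_def)
    thus "s * (mdet N C + int m * Delta N C \<xi>) = awX N C \<xi> adj m w"
      using KA aw by (simp add: D_def[symmetric] Dl)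
  next
    assume h: "s * (mdet N C + int m * Delta N C \<xi>) = awX N C \<xi> adj m w"
    define cc where "cc = chainv ?wp m s 0"
    have "D * cc 0 = nu + D' * cc 1" using h KA aw by (simp add: cc_def D_def[symmetric] Dl)
    hence "D * cc 0 = (\<Sum>p\<in>N. adj \<xi> p * (w (Inl p) + (if p = \<xi> then cc 1 else 0)))"
      using nuv by simp
    hence "\<exists>c. (\<forall>p\<in>N. w (Inl p) + (if p = \<xi> then cc 1 else 0) = (\<Sum>q\<in>N. C p q * c q)) \<and> c \<xi> = cc 0"
      using R_iff[OF ap fin xi D0 cop, of "\<lambda>p. w (Inl p) + (if p = \<xi> then cc 1 else 0)" "cc 0"]
      unfolding D_def by simp
    then obtain cX where cX: "\<forall>p\<in>N. w (Inl p) + (if p = \<xi> then cc 1 else 0) = (\<Sum>q\<in>N. C p q * cX q)"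
      and cX0: "cX \<xi> = cc 0" by blast
    define c where "c = (\<lambda>u. case u of Inl q \<Rightarrow> cX q | Inr t \<Rightarrow> cc t)"
    have ccc: "ccX c \<xi> m t = cc t" if "t \<le> Suc m" for t
    proof -
      have "cc (Suc m) = 0" by (simp add: cc_def chainv_k)
      thus ?thesis using that cX0 by (auto simp: ccX_def c_def le_Suc_eq)
    qed
    have m0: "m = 0 \<Longrightarrow> cc 1 = 0" by (simp add: cc_def chainv_def FF_def)
    have eq: "eqsX N C \<xi> m w c"
      unfolding eqsX_def
    proof
      fix u assume u: "u \<in> ext_nodes N m"
      show "w u = (\<Sum>q\<in>ext_nodes N m. ext_mat C \<xi> u q * c q)"
      proof (cases u)
        case (Inl p)
        hence p: "p \<in> N" using u by (auto simp: ext_nodes_def)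
        have e1: "(\<Sum>q\<in>N. C p q * c (Inl q)) = (\<Sum>q\<in>N. C p q * cX q)" by (simp add: c_def)
        have e2: "ccX c \<xi> m 1 = cc 1" using ccc[of 1] by simp
        have e3: "w (Inl p) + (if p = \<xi> then cc 1 else 0) = (\<Sum>q\<in>N. C p q * cX q)" using cX p by blast
        show ?thesis unfolding Inl ext_row_Inl[OF fin p] e1 e2 e3[symmetric] by simp
      next
        case (Inr t)
        hence t: "t \<in> {1..m}" using u by (auto simp: ext_nodes_def)
        have e: "ccX c \<xi> m t = cc t" "ccX c \<xi> m (t - 1) = cc (t - 1)" "ccX c \<xi> m (Suc t) = cc (Suc t)"
          using t ccc[of t] ccc[of "t - 1"] ccc[of "Suc t"] by auto
        have t1: "1 \<le> t" "t \<le> m" using t by auto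
        show ?thesis unfolding Inr ext_row_Inr[OF fin xi t] e unfolding cc_def
          using chain_bwd[OF t1, of ?wp s 0] by simp
      qed
    qed
    have "cc m = s" unfolding cc_def by (rule chainv_k)
    hence "c (ext_top \<xi> m) = s"
      by (cases "m = 0") (simp_all add: c_def ext_top_def cX0)
    thus "\<exists>c. eqsX N C \<xi> m w c \<and> c (ext_top \<xi> m) = s" using eq by blast
  qed
qed

lemma XK:
  assumes ap: "adjprops N C \<xi> adj" and fin: "finite N" and xi: "\<xi> \<in> N"
    and D0: "mdet N C \<noteq> 0" and cop: "coprime (mdet N C) (mdet (N - {\<xi>}) C)"
    and eq: "eqsX N C \<xi> m (\<lambda>_. 0) c" and nz: "mdet N C + int m * Delta N C \<xi> \<noteq> 0"
  shows "\<forall>u\<in>ext_nodes N m. c u = 0"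
proof -
  have aw0: "awX N C \<xi> adj m (\<lambda>_. 0) = 0" by (simp add: awX_def)
  have ex: "\<exists>ca. eqsX N C \<xi> m (\<lambda>_. 0) ca \<and> ca (ext_top \<xi> m) = c (ext_top \<xi> m)" using eq by blast
  have "c (ext_top \<xi> m) * (mdet N C + int m * Delta N C \<xi>) = awX N C \<xi> adj m (\<lambda>_. 0)"
    by (rule iffD1[OF XM[OF ap fin xi D0 cop, of m "\<lambda>_. 0" "c (ext_top \<xi> m)"] ex])
  hence "c (ext_top \<xi> m) * (mdet N C + int m * Delta N C \<xi>) = 0" using aw0 by simp
  hence s0: "c (ext_top \<xi> m) = 0" using nz by simp
  note F = XM_fwd_aux[OF ap fin xi eq]
  have z: "chainv (\<lambda>t. 0) m 0 0 t = 0" for t by (simp add: chainv_def FF_def)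
  have cc0: "ccX c \<xi> m t = 0" if "t \<le> Suc m" for t using F that s0 z by simp
  have c1: "ccX c \<xi> m 1 = 0" using cc0[of 1] by simp
  have inl: "\<forall>p\<in>N. 0 = (\<Sum>q\<in>N. C p q * c (Inl q))"
  proof
    fix p assume p: "p \<in> N"
    have "0 + (if p = \<xi> then ccX c \<xi> m 1 else 0) = (\<Sum>q\<in>N. C p q * c (Inl q))" using F p by fastforce
    thus "0 = (\<Sum>q\<in>N. C p q * c (Inl q))" using c1 by (cases "p = \<xi>") simp_all
  qed
  have cl: "c (Inl r) = 0" if r: "r \<in> N" for r
  proof -
    have "mdet N C * c (Inl r) = (\<Sum>q\<in>N. (if r = q then mdet N C * c (Inl q) else 0))" using fin r by simp
    also have "\<dots> = (\<Sum>q\<in>N. (\<Sum>p\<in>N. adj r p * C p q) * c (Inl q))"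
      using ap r unfolding adjprops_def by (intro sum.cong) auto
    also have "\<dots> = (\<Sum>p\<in>N. adj r p * (\<Sum>q\<in>N. C p q * c (Inl q)))"
      by (simp add: sum_distrib_left sum_distrib_right mult.assoc) (rule sum.swap)
    also have "\<dots> = 0" using inl by simp
    finally show ?thesis using D0 by simp
  qed
  have cr: "c (Inr t) = 0" if t: "t \<in> {1..m}" for t
    using cc0[of t] t by (simp add: ccX_def)
  show ?thesis using cl cr by (auto simp: ext_nodes_def)
qed

lemma finite_ext: "finite N \<Longrightarrow> finite (ext_nodes N m)" by (simp add: ext_nodes_def)

lemma det_ext_nz:
  assumes ap: "adjprops N C \<xi> adj" and fin: "finite N" and xi: "\<xi> \<in> N"
    and D0: "mdet N C \<noteq> 0" and cop: "coprime (mdet N C) (mdet (N - {\<xi>}) C)"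
    and nz: "mdet N C + int m * Delta N C \<xi> \<noteq> 0"
  shows "mdet (ext_nodes N m) (ext_mat C \<xi>) \<noteq> 0"
proof
  assume "mdet (ext_nodes N m) (ext_mat C \<xi>) = 0"
  then obtain c where c: "\<exists>q\<in>ext_nodes N m. c q \<noteq> 0"
    and k: "\<forall>p\<in>ext_nodes N m. (\<Sum>q\<in>ext_nodes N m. ext_mat C \<xi> p q * c q) = 0"
    using ker_exists[OF finite_ext[OF fin]] by blast
  have "eqsX N C \<xi> m (\<lambda>_. 0) c" using k by (simp add: eqsX_def)
  thus False using XK[OF ap fin xi D0 cop _ nz] c by blast
qed

definition astar :: "'n set \<Rightarrow> ('n \<Rightarrow> 'n \<Rightarrow> int) \<Rightarrow> 'n \<Rightarrow> ('n \<Rightarrow> nat) \<Rightarrow> ('n \<Rightarrow> 'n \<Rightarrow> int) \<Rightarrow> nat \<Rightarrow> int" where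
  "astar N C \<xi> \<epsilon> adj j = (if j = 0 then 0 else if j \<le> card N then adj \<xi> (inv_into N \<epsilon> j)
       else mdet (N - {\<xi>}) C + int (j - card N) * Delta N C \<xi>)"

lemma awX_lin: "finite N \<Longrightarrow> awX N C \<xi> adj m (\<lambda>q. \<alpha> * f q + \<beta> * g q) = \<alpha> * awX N C \<xi> adj m f + \<beta> * awX N C \<xi> adj m g"
  by (simp add: awX_def sum.distrib sum_distrib_left algebra_simps)

lemma awX_fund:
  assumes fin: "finite N" and num: "numbering N \<xi> \<epsilon>" and u: "u \<in> ext_nodes N m"
  shows "awX N C \<xi> adj m (fund_weight u) = astar N C \<xi> \<epsilon> adj (ext_num \<epsilon> (card N) u)"
proof (cases u)
  case (Inl p)
  hence p: "p \<in> N" using u by (auto simp: ext_nodes_def)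
  have b: "bij_betw \<epsilon> N {1..card N}" using num by (simp add: numbering_def)
  have ep: "\<epsilon> p \<in> {1..card N}" using b p by (auto simp: bij_betw_def)
  have "inv_into N \<epsilon> (\<epsilon> p) = p" using b p by (simp add: bij_betw_inv_into_left)
  hence "astar N C \<xi> \<epsilon> adj (\<epsilon> p) = adj \<xi> p" using ep by (simp add: astar_def)
  moreover have "awX N C \<xi> adj m (fund_weight u) = adj \<xi> p"
    using fin p by (simp add: awX_def fund_weight_def Inl if_distrib cong: if_cong)
  ultimately show ?thesis by (simp add: Inl ext_num_def)
next
  case (Inr t)
  hence t: "t \<in> {1..m}" using u by (auto simp: ext_nodes_def)
  have "awX N C \<xi> adj m (fund_weight u) = mdet (N - {\<xi>}) C + int t * Delta N C \<xi>"
    using fin t by (simp add: awX_def fund_weight_def Inr if_distrib cong: if_cong)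
  thus ?thesis using t by (simp add: Inr ext_num_def astar_def)
qed

lemma awX_top:
  assumes ap: "adjprops N C \<xi> adj" and fin: "finite N" and xi: "\<xi> \<in> N"
  shows "awX N C \<xi> adj m (fund_weight (ext_top \<xi> m)) = mdet (N - {\<xi>}) C + int m * Delta N C \<xi>"
proof (cases "m = 0")
  case True
  thus ?thesis using fin xi ap by (simp add: awX_def fund_weight_def ext_top_def adjprops_def if_distrib cong: if_cong)
next
  case False
  thus ?thesis using fin by (simp add: awX_def fund_weight_def ext_top_def if_distrib cong: if_cong)
qed

lemma coprime_shift:
  fixes D D' Dl :: int
  assumes "coprime D Dl" "Dl = D - D'"
  shows "coprime (D + int m * Dl) (D' + int m * Dl)"
proof (rule coprimeI)
  fix c assume c1: "c dvd D + int m * Dl" and c2: "c dvd D' + int m * Dl"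
  have "c dvd (D + int m * Dl) - (D' + int m * Dl)" using c1 c2 by (rule dvd_diff)
  hence cD: "c dvd Dl" using assms(2) by simp
  have "c dvd (D + int m * Dl) - int m * Dl" using c1 cD by (intro dvd_diff) auto
  hence "c dvd D" by simp
  thus "is_unit c" using cD assms(1) by (meson coprime_common_divisor)
qed

lemma a_prop_astar:
  assumes ap: "adjprops N C \<xi> adj" and fin: "finite N" and xi: "\<xi> \<in> N"
    and D0: "mdet N C \<noteq> 0" and cop: "coprime (mdet N C) (mdet (N - {\<xi>}) C)"
    and num: "numbering N \<xi> \<epsilon>"
  shows "a_prop N C \<xi> \<epsilon> (astar N C \<xi> \<epsilon> adj)"
  unfolding a_prop_def
proof (intro allI impI ballI)
  fix m p assume p: "p \<in> ext_nodes N m"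
  let ?a = "astar N C \<xi> \<epsilon> adj (ext_num \<epsilon> (card N) p)"
  let ?w = "\<lambda>q. - Delta N C \<xi> * fund_weight p q - ?a * fund_weight (ext_top \<xi> m) q"
  have "awX N C \<xi> adj m ?w = - Delta N C \<xi> * ?a - ?a * (mdet (N - {\<xi>}) C + int m * Delta N C \<xi>)"
    using awX_lin[OF fin, of C \<xi> adj m "- Delta N C \<xi>" "fund_weight p" "- ?a" "fund_weight (ext_top \<xi> m)"]
      awX_fund[OF fin num p, of C adj] awX_top[OF ap fin xi, of m] by simp
  also have "\<dots> = (- ?a) * (mdet N C + int m * Delta N C \<xi>)"
    by (simp add: Delta_def algebra_simps)
  finally have "\<exists>c. eqsX N C \<xi> m ?w c \<and> c (ext_top \<xi> m) = - ?a"
    using XM[OF ap fin xi D0 cop] by simp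
  thus "in_root_lattice (ext_nodes N m) (ext_mat C \<xi>) ?w"
    by (auto simp: in_root_lattice_def eqsX_def)
qed

lemma a_prop_unique:
  assumes ap: "adjprops N C \<xi> adj" and fin: "finite N" and xi: "\<xi> \<in> N"
    and ext: "extensible N C \<xi>" and num: "numbering N \<xi> \<epsilon>"
    and a: "a_prop N C \<xi> \<epsilon> a" and a0: "a 0 = 0"
  shows "a = astar N C \<xi> \<epsilon> adj"
proof
  fix j
  define D where "D = mdet N C"
  define D' where "D' = mdet (N - {\<xi>}) C"
  define Dl where "Dl = Delta N C \<xi>"
  have D0: "D \<noteq> 0" and Dl0: "Dl \<noteq> 0" and g: "gcd D Dl = 1"
    using ext by (auto simp: extensible_def D_def Dl_def)
  have copDl: "coprime D Dl" using g by (simp add: coprime_iff_gcd_eq_1)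
  have DlD: "Dl = D - D'" by (simp add: Dl_def D_def D'_def Delta_def)
  have cop: "coprime (mdet N C) (mdet (N - {\<xi>}) C)"
    using coprime_shift[OF copDl DlD, of 0] by (simp add: D_def D'_def)
  show "a j = astar N C \<xi> \<epsilon> adj j"
  proof (cases "j = 0")
    case True thus ?thesis using a0 by (simp add: astar_def)
  next
    case False
    define b where "b = astar N C \<xi> \<epsilon> adj j - a j"
    have b: "D + int m * Dl dvd b" if m: "m \<ge> j" and nz: "D + int m * Dl \<noteq> 0" for m
    proof -
      have b1: "bij_betw \<epsilon> N {1..card N}" using num by (simp add: numbering_def)
      define p where "p = (if j \<le> card N then Inl (inv_into N \<epsilon> j) else Inr (j - card N))"
      have pe: "p \<in> ext_nodes N m \<and> ext_num \<epsilon> (card N) p = j"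
      proof (cases "j \<le> card N")
        case True
        hence "j \<in> {1..card N}" using False by auto
        hence "inv_into N \<epsilon> j \<in> N" "\<epsilon> (inv_into N \<epsilon> j) = j" using b1
          by (auto simp: bij_betw_def intro: inv_into_into f_inv_into_f)
        thus ?thesis using True by (simp add: p_def ext_nodes_def ext_num_def)
      next
        case f: False
        have "j - card N \<in> {1..m}" using f m by auto
        hence "Inr (j - card N) \<in> ext_nodes N m" unfolding ext_nodes_def by blast
        moreover have "ext_num \<epsilon> (card N) (Inr (j - card N)) = j" using f by (simp add: ext_num_def)
        ultimately show ?thesis using f unfolding p_def by simp
      qed
      have det: "mdet (ext_nodes N m) (ext_mat C \<xi>) \<noteq> 0"
        using det_ext_nz[OF ap fin xi _ cop] D0 nz by (simp add: D_def Dl_def)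
      let ?w = "\<lambda>q. - Delta N C \<xi> * fund_weight p q - a j * fund_weight (ext_top \<xi> m) q"
      have "\<forall>p\<in>ext_nodes N m. in_root_lattice (ext_nodes N m) (ext_mat C \<xi>)
          (\<lambda>q. - Delta N C \<xi> * fund_weight p q - a (ext_num \<epsilon> (card N) p) * fund_weight (ext_top \<xi> m) q)"
        using a det unfolding a_prop_def by blast
      hence "in_root_lattice (ext_nodes N m) (ext_mat C \<xi>)
          (\<lambda>q. - Delta N C \<xi> * fund_weight p q - a (ext_num \<epsilon> (card N) p) * fund_weight (ext_top \<xi> m) q)"
        using pe by blast
      hence "in_root_lattice (ext_nodes N m) (ext_mat C \<xi>) ?w" using pe by simp
      then obtain c where "eqsX N C \<xi> m ?w c" by (auto simp: in_root_lattice_def eqsX_def)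
      hence "c (ext_top \<xi> m) * (D + int m * Dl) = awX N C \<xi> adj m ?w"
        using XM[OF ap fin xi _ cop, of m ?w "c (ext_top \<xi> m)"] D0 by (auto simp: D_def Dl_def)
      also have "awX N C \<xi> adj m ?w = - Dl * astar N C \<xi> \<epsilon> adj j - a j * (D' + int m * Dl)"
        using awX_lin[OF fin, of C \<xi> adj m "- Delta N C \<xi>" "fund_weight p" "- a j" "fund_weight (ext_top \<xi> m)"]
          awX_fund[OF fin num, of p m C adj] pe awX_top[OF ap fin xi, of m] by (simp add: Dl_def D'_def)
      also have "\<dots> = b * (D' + int m * Dl) - astar N C \<xi> \<epsilon> adj j * (D + int m * Dl)"
        by (simp add: b_def DlD algebra_simps)
      finally have "b * (D' + int m * Dl) = (D + int m * Dl) * (c (ext_top \<xi> m) + astar N C \<xi> \<epsilon> adj j)"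
        by (simp add: algebra_simps)
      hence "D + int m * Dl dvd b * (D' + int m * Dl)" by (rule dvdI)
      moreover have "coprime (D + int m * Dl) (D' + int m * Dl)" by (rule coprime_shift[OF copDl DlD])
      ultimately show ?thesis by (simp add: coprime_dvd_mult_left_iff)
    qed
    define m where "m = j + nat \<bar>D\<bar> + nat \<bar>b\<bar> + 1"
    have big: "\<bar>D + int m * Dl\<bar> > \<bar>b\<bar>"
    proof -
      have "\<bar>Dl\<bar> \<ge> 1" using Dl0 by linarith
      hence "int m * 1 \<le> int m * \<bar>Dl\<bar>" by (intro mult_left_mono) auto
      hence "\<bar>int m * Dl\<bar> \<ge> int m" by (simp add: abs_mult)
      moreover have "int m = int j + \<bar>D\<bar> + \<bar>b\<bar> + 1" by (simp add: m_def)
      ultimately show ?thesis by linarith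
    qed
    hence nz: "D + int m * Dl \<noteq> 0" by auto
    have "D + int m * Dl dvd b" using b[OF _ nz] by (simp add: m_def)
    hence "b = 0" using big dvd_imp_le_int[of b "D + int m * Dl"] by force
    thus ?thesis by (simp add: b_def)
  qed
qed

lemma a_seq_eq:
  assumes ap: "adjprops N C \<xi> adj" and fin: "finite N" and xi: "\<xi> \<in> N"
    and ext: "extensible N C \<xi>" and num: "numbering N \<xi> \<epsilon>"
  shows "a_seq N C \<xi> \<epsilon> = astar N C \<xi> \<epsilon> adj"
proof -
  have D0: "mdet N C \<noteq> 0" and g: "gcd (mdet N C) (Delta N C \<xi>) = 1" using ext by (auto simp: extensible_def)
  have cop: "coprime (mdet N C) (mdet (N - {\<xi>}) C)"
    using coprime_shift[of "mdet N C" "Delta N C \<xi>" "mdet (N - {\<xi>}) C" 0] g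
    by (simp add: coprime_iff_gcd_eq_1 Delta_def)
  show ?thesis unfolding a_seq_def
  proof (rule the_equality)
    show "a_prop N C \<xi> \<epsilon> (astar N C \<xi> \<epsilon> adj) \<and> astar N C \<xi> \<epsilon> adj 0 = 0"
      using a_prop_astar[OF ap fin xi D0 cop num] by (simp add: astar_def)
    show "\<And>a. a_prop N C \<xi> \<epsilon> a \<and> a 0 = 0 \<Longrightarrow> a = astar N C \<xi> \<epsilon> adj"
      using a_prop_unique[OF ap fin xi ext num] by blast
  qed
qed

lemma Z_nodes_ext: "Z_nodes N1 N2 k = Inl ` ext_nodes N1 k \<union> Inr ` N2"
  by (simp add: Z_nodes_def ext_nodes_def)

lemma sum_Z:
  assumes "finite N1" "finite N2"
  shows "(\<Sum>q\<in>Z_nodes N1 N2 k. f q) = (\<Sum>u\<in>ext_nodes N1 k. f (Inl u)) + (\<Sum>b\<in>N2. f (Inr b))"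
proof -
  have "(\<Sum>q\<in>Z_nodes N1 N2 k. f q) = (\<Sum>q\<in>Inl ` ext_nodes N1 k. f q) + (\<Sum>q\<in>Inr ` N2. f q)"
    unfolding Z_nodes_ext using assms finite_ext[OF assms(1)] by (intro sum.union_disjoint) auto
  also have "\<dots> = (\<Sum>u\<in>ext_nodes N1 k. f (Inl u)) + (\<Sum>b\<in>N2. f (Inr b))"
    by (simp add: sum.reindex)
  finally show ?thesis .
qed

lemma Zmat_simps[simp]:
  "Z_mat C1 \<xi>1 C2 \<xi>2 k (Inl u) (Inl v) = ext_mat C1 \<xi>1 u v"
  "Z_mat C1 \<xi>1 C2 \<xi>2 k (Inr p) (Inr q) = C2 p q"
  "Z_mat C1 \<xi>1 C2 \<xi>2 k (Inl u) (Inr q) = (if u = Inr k \<and> q = \<xi>2 then -1 else 0)"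
  "Z_mat C1 \<xi>1 C2 \<xi>2 k (Inr p) (Inl v) = (if v = Inr k \<and> p = \<xi>2 then -1 else 0)"
  by (cases u; cases v; auto simp: Z_mat_def)+

lemma Zrow_L:
  assumes fin1: "finite N1" and fin2: "finite N2" and xi2: "\<xi>2 \<in> N2" and u: "u \<in> ext_nodes N1 k"
  shows "(\<Sum>q\<in>Z_nodes N1 N2 k. Z_mat C1 \<xi>1 C2 \<xi>2 k (Inl u) q * c q) =
    (\<Sum>v\<in>ext_nodes N1 k. ext_mat C1 \<xi>1 u v * c (Inl v)) - (if u = Inr k then c (Inr \<xi>2) else 0)"
proof -
  have "(\<Sum>b\<in>N2. Z_mat C1 \<xi>1 C2 \<xi>2 k (Inl u) (Inr b) * c (Inr b)) =
        (\<Sum>b\<in>N2. if b = \<xi>2 then (if u = Inr k then - c (Inr b) else 0) else 0)"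
    by (rule sum.cong[OF refl]) auto
  also have "\<dots> = - (if u = Inr k then c (Inr \<xi>2) else 0)" using fin2 xi2 by (simp add: sum.delta)
  finally show ?thesis unfolding sum_Z[OF fin1 fin2] by simp
qed

lemma Zrow_R:
  assumes fin1: "finite N1" and fin2: "finite N2" and b: "b \<in> N2" and k: "1 \<le> k"
  shows "(\<Sum>q\<in>Z_nodes N1 N2 k. Z_mat C1 \<xi>1 C2 \<xi>2 k (Inr b) q * c q) =
    (\<Sum>b'\<in>N2. C2 b b' * c (Inr b')) - (if b = \<xi>2 then c (Inl (Inr k)) else 0)"
proof -
  have "(\<Sum>v\<in>ext_nodes N1 k. Z_mat C1 \<xi>1 C2 \<xi>2 k (Inr b) (Inl v) * c (Inl v)) =
        (\<Sum>v\<in>ext_nodes N1 k. if v = Inr k then (if b = \<xi>2 then - c (Inl v) else 0) else 0)"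
    by (rule sum.cong[OF refl]) auto
  also have "\<dots> = - (if b = \<xi>2 then c (Inl (Inr k)) else 0)"
    using finite_ext[OF fin1] k by (simp add: sum.delta ext_nodes_def)
  finally show ?thesis unfolding sum_Z[OF fin1 fin2] by simp
qed

lemma Z_split:
  assumes fin1: "finite N1" and fin2: "finite N2" and xi2: "\<xi>2 \<in> N2" and k: "1 \<le> k"
  shows "(\<forall>v\<in>Z_nodes N1 N2 k. w v = (\<Sum>q\<in>Z_nodes N1 N2 k. Z_mat C1 \<xi>1 C2 \<xi>2 k v q * c q)) \<longleftrightarrow>
    eqsX N1 C1 \<xi>1 k (\<lambda>u. w (Inl u) + (if u = Inr k then c (Inr \<xi>2) else 0)) (\<lambda>u. c (Inl u)) \<and>
    (\<forall>b\<in>N2. w (Inr b) + (if b = \<xi>2 then c (Inl (Inr k)) else 0) = (\<Sum>b'\<in>N2. C2 b b' * c (Inr b')))"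
proof -
  have L: "(w (Inl u) = (\<Sum>q\<in>Z_nodes N1 N2 k. Z_mat C1 \<xi>1 C2 \<xi>2 k (Inl u) q * c q)) \<longleftrightarrow>
      (w (Inl u) + (if u = Inr k then c (Inr \<xi>2) else 0) = (\<Sum>v\<in>ext_nodes N1 k. ext_mat C1 \<xi>1 u v * c (Inl v)))"
    if u: "u \<in> ext_nodes N1 k" for u
    unfolding Zrow_L[OF fin1 fin2 xi2 u] by auto
  have R: "(w (Inr b) = (\<Sum>q\<in>Z_nodes N1 N2 k. Z_mat C1 \<xi>1 C2 \<xi>2 k (Inr b) q * c q)) \<longleftrightarrow>
      (w (Inr b) + (if b = \<xi>2 then c (Inl (Inr k)) else 0) = (\<Sum>b'\<in>N2. C2 b b' * c (Inr b')))"
    if b: "b \<in> N2" for b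
    unfolding Zrow_R[OF fin1 fin2 b k] by auto
  have sp: "(\<forall>v\<in>Z_nodes N1 N2 k. P v) \<longleftrightarrow> (\<forall>u\<in>ext_nodes N1 k. P (Inl u)) \<and> (\<forall>b\<in>N2. P (Inr b))" for P
    unfolding Z_nodes_ext by auto
  show ?thesis unfolding sp eqsX_def using L R by (auto cong: ball_cong)
qed

lemma awX_shift:
  assumes "finite N" "1 \<le> k"
  shows "awX N C \<xi> adj k (\<lambda>u. f u + (if u = Inr k then z else 0)) =
     awX N C \<xi> adj k f + (mdet (N - {\<xi>}) C + int k * Delta N C \<xi>) * z"
proof -
  have "(\<Sum>t\<in>{1..k}. (mdet (N - {\<xi>}) C + int t * Delta N C \<xi>) * (f (Inr t) + (if Inr t = (Inr k :: 'a + nat) then z else 0)))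
     = (\<Sum>t\<in>{1..k}. (mdet (N - {\<xi>}) C + int t * Delta N C \<xi>) * f (Inr t))
       + (\<Sum>t\<in>{1..k}. if t = k then (mdet (N - {\<xi>}) C + int t * Delta N C \<xi>) * z else 0)"
    by (subst sum.distrib[symmetric]) (rule sum.cong, auto simp: algebra_simps)
  also have "(\<Sum>t\<in>{1..k}. if t = k then (mdet (N - {\<xi>}) C + int t * Delta N C \<xi>) * z else 0)
     = (mdet (N - {\<xi>}) C + int k * Delta N C \<xi>) * z" using assms by simp
  finally show ?thesis by (simp add: awX_def)
qed

lemma sys2:
  fixes D1 D1' D2 D2' A B :: int
  assumes l1: "L1 = D1 - D1'" and l2: "L2 = D2 - D2'" and cop: "coprime L1 L2" and L10: "L1 \<noteq> 0"
  shows "(\<exists>s u. s * (D1 + int k * L1) = A + (D1' + int k * L1) * u \<and> D2 * u = B + D2' * s)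
     \<longleftrightarrow> (L2 * (D1 + int k * L1) + L1 * D2') dvd (L2 * A - L1 * B)"
proof
  assume "\<exists>s u. s * (D1 + int k * L1) = A + (D1' + int k * L1) * u \<and> D2 * u = B + D2' * s"
  then obtain s u where e1: "s * (D1 + int k * L1) = A + (D1' + int k * L1) * u" and e2: "D2 * u = B + D2' * s" by blast
  have "L2 * A - L1 * B = (s - u) * (L2 * (D1 + int k * L1) + L1 * D2')"
  proof -
    have "L2 * A - L1 * B = L2 * (s * (D1 + int k * L1) - (D1' + int k * L1) * u) - L1 * (D2 * u - D2' * s)"
      using e1 e2 by (simp add: algebra_simps)
    also have "\<dots> = (s - u) * (L2 * (D1 + int k * L1) + L1 * D2')"
      unfolding l1 l2 by (simp add: algebra_simps)
    finally show ?thesis .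
  qed
  thus "(L2 * (D1 + int k * L1) + L1 * D2') dvd (L2 * A - L1 * B)" by simp
next
  define d where "d = L2 * (D1 + int k * L1) + L1 * D2'"
  assume "d dvd (L2 * A - L1 * B)"
  then obtain g where g: "L2 * A - L1 * B = d * g" by (elim dvdE)
  define X1 where "X1 = A - (D1' + int k * L1) * g"
  define X2 where "X2 = B + D2 * g"
  have "L2 * X1 - L1 * X2 = L2 * A - L1 * B - g * (L2 * (D1' + int k * L1) + L1 * D2)"
    by (simp add: X1_def X2_def algebra_simps)
  also have "L2 * (D1' + int k * L1) + L1 * D2 = d" unfolding d_def l1 l2 by (simp add: algebra_simps)
  finally have X: "L2 * X1 = L1 * X2" using g by (simp add: algebra_simps)
  hence "L1 dvd L2 * X1" by (metis dvd_triv_left)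
  hence "L1 dvd X1" using cop by (simp add: coprime_dvd_mult_right_iff)
  then obtain s where s: "X1 = L1 * s" by (elim dvdE)
  have s2: "X2 = L2 * s" using X s L10 by (simp add: algebra_simps)
  define u where "u = s - g"
  have "s * (D1 + int k * L1) = A + (D1' + int k * L1) * u"
    using s unfolding X1_def u_def l1 by (simp add: algebra_simps)
  moreover have "D2 * u = B + D2' * s"
    using s2 unfolding X2_def u_def l2 by (simp add: algebra_simps)
  ultimately show "\<exists>s u. s * (D1 + int k * L1) = A + (D1' + int k * L1) * u \<and> D2 * u = B + D2' * s" by blast
qed

lemma ZM:
  assumes ap1: "adjprops N1 C1 \<xi>1 adj1" and fin1: "finite N1" and xi1: "\<xi>1 \<in> N1"
    and D10: "mdet N1 C1 \<noteq> 0" and cop1: "coprime (mdet N1 C1) (mdet (N1 - {\<xi>1}) C1)"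
    and ap2: "adjprops N2 C2 \<xi>2 adj2" and fin2: "finite N2" and xi2: "\<xi>2 \<in> N2"
    and D20: "mdet N2 C2 \<noteq> 0" and cop2: "coprime (mdet N2 C2) (mdet (N2 - {\<xi>2}) C2)"
    and k: "1 \<le> k"
  shows "in_root_lattice (Z_nodes N1 N2 k) (Z_mat C1 \<xi>1 C2 \<xi>2 k) w \<longleftrightarrow>
    (\<exists>s u. s * (mdet N1 C1 + int k * Delta N1 C1 \<xi>1) =
        awX N1 C1 \<xi>1 adj1 k (\<lambda>v. w (Inl v)) + (mdet (N1 - {\<xi>1}) C1 + int k * Delta N1 C1 \<xi>1) * u
      \<and> mdet N2 C2 * u = (\<Sum>b\<in>N2. adj2 \<xi>2 b * w (Inr b)) + mdet (N2 - {\<xi>2}) C2 * s)"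
proof -
  let ?w1 = "\<lambda>u v. w (Inl v) + (if v = Inr k then u else 0)"
  let ?w2 = "\<lambda>s b. w (Inr b) + (if b = \<xi>2 then s else 0)"
  have top: "ext_top \<xi>1 k = Inr k" using k by (simp add: ext_top_def)
  have nu2: "(\<Sum>b\<in>N2. adj2 \<xi>2 b * ?w2 s b) = (\<Sum>b\<in>N2. adj2 \<xi>2 b * w (Inr b)) + mdet (N2 - {\<xi>2}) C2 * s" for s
  proof -
    have "(\<Sum>b\<in>N2. adj2 \<xi>2 b * ?w2 s b) = (\<Sum>b\<in>N2. adj2 \<xi>2 b * w (Inr b)) + (\<Sum>b\<in>N2. if b = \<xi>2 then adj2 \<xi>2 b * s else 0)"
      by (subst sum.distrib[symmetric]) (rule sum.cong, auto simp: algebra_simps)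
    also have "(\<Sum>b\<in>N2. if b = \<xi>2 then adj2 \<xi>2 b * s else 0) = mdet (N2 - {\<xi>2}) C2 * s"
      using fin2 xi2 ap2 by (simp add: adjprops_def)
    finally show ?thesis .
  qed
  have "in_root_lattice (Z_nodes N1 N2 k) (Z_mat C1 \<xi>1 C2 \<xi>2 k) w \<longleftrightarrow>
     (\<exists>s u. (\<exists>c1. eqsX N1 C1 \<xi>1 k (?w1 u) c1 \<and> c1 (ext_top \<xi>1 k) = s) \<and>
            (\<exists>c2. (\<forall>b\<in>N2. ?w2 s b = (\<Sum>b'\<in>N2. C2 b b' * c2 b')) \<and> c2 \<xi>2 = u))"
  proof
    assume "in_root_lattice (Z_nodes N1 N2 k) (Z_mat C1 \<xi>1 C2 \<xi>2 k) w"
    then obtain c where c: "\<forall>v\<in>Z_nodes N1 N2 k. w v = (\<Sum>q\<in>Z_nodes N1 N2 k. Z_mat C1 \<xi>1 C2 \<xi>2 k v q * c q)"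
      by (auto simp: in_root_lattice_def)
    note S = iffD1[OF Z_split[OF fin1 fin2 xi2 k] c]
    show "\<exists>s u. (\<exists>c1. eqsX N1 C1 \<xi>1 k (?w1 u) c1 \<and> c1 (ext_top \<xi>1 k) = s) \<and>
            (\<exists>c2. (\<forall>b\<in>N2. ?w2 s b = (\<Sum>b'\<in>N2. C2 b b' * c2 b')) \<and> c2 \<xi>2 = u)"
    proof (intro exI conjI)
      show "eqsX N1 C1 \<xi>1 k (?w1 (c (Inr \<xi>2))) (\<lambda>u. c (Inl u))" using S by simp
      show "(\<lambda>u. c (Inl u)) (ext_top \<xi>1 k) = c (Inl (Inr k))" using top by simp
      show "\<forall>b\<in>N2. ?w2 (c (Inl (Inr k))) b = (\<Sum>b'\<in>N2. C2 b b' * (\<lambda>b. c (Inr b)) b')" using S by simp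
      show "(\<lambda>b. c (Inr b)) \<xi>2 = c (Inr \<xi>2)" by simp
    qed
  next
    assume "\<exists>s u. (\<exists>c1. eqsX N1 C1 \<xi>1 k (?w1 u) c1 \<and> c1 (ext_top \<xi>1 k) = s) \<and>
            (\<exists>c2. (\<forall>b\<in>N2. ?w2 s b = (\<Sum>b'\<in>N2. C2 b b' * c2 b')) \<and> c2 \<xi>2 = u)"
    then obtain s u c1 c2 where h1: "eqsX N1 C1 \<xi>1 k (?w1 u) c1" "c1 (ext_top \<xi>1 k) = s"
      and h2: "\<forall>b\<in>N2. ?w2 s b = (\<Sum>b'\<in>N2. C2 b b' * c2 b')" "c2 \<xi>2 = u" by blast
    define c where "c = (\<lambda>v. case v of Inl v' \<Rightarrow> c1 v' | Inr b \<Rightarrow> c2 b)"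
    have cu: "c (Inr \<xi>2) = u" using h2 by (simp add: c_def)
    have cl: "(\<lambda>u. c (Inl u)) = c1" by (simp add: c_def)
    have A: "eqsX N1 C1 \<xi>1 k (?w1 (c (Inr \<xi>2))) (\<lambda>u. c (Inl u))" unfolding cu cl by (rule h1(1))
    have B: "\<forall>b\<in>N2. ?w2 (c (Inl (Inr k))) b = (\<Sum>b'\<in>N2. C2 b b' * c (Inr b'))"
    proof -
      have ck: "c (Inl (Inr k)) = s" using h1 top by (simp add: c_def)
      have cr: "\<And>b. c (Inr b) = c2 b" by (simp add: c_def)
      show ?thesis unfolding ck cr by (rule h2(1))
    qed
    have "eqsX N1 C1 \<xi>1 k (\<lambda>v. w (Inl v) + (if v = Inr k then c (Inr \<xi>2) else 0)) (\<lambda>u. c (Inl u)) \<and>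
      (\<forall>b\<in>N2. w (Inr b) + (if b = \<xi>2 then c (Inl (Inr k)) else 0) = (\<Sum>b'\<in>N2. C2 b b' * c (Inr b')))"
      using A B by blast
    hence "\<forall>v\<in>Z_nodes N1 N2 k. w v = (\<Sum>q\<in>Z_nodes N1 N2 k. Z_mat C1 \<xi>1 C2 \<xi>2 k v q * c q)"
      using Z_split[OF fin1 fin2 xi2 k] by blast
    thus "in_root_lattice (Z_nodes N1 N2 k) (Z_mat C1 \<xi>1 C2 \<xi>2 k) w" by (auto simp: in_root_lattice_def)
  qed
  also have "\<dots> \<longleftrightarrow> (\<exists>s u. s * (mdet N1 C1 + int k * Delta N1 C1 \<xi>1) = awX N1 C1 \<xi>1 adj1 k (?w1 u)
       \<and> mdet N2 C2 * u = (\<Sum>b\<in>N2. adj2 \<xi>2 b * ?w2 s b))"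
    using XM[OF ap1 fin1 xi1 D10 cop1] R_iff[OF ap2 fin2 xi2 D20 cop2] by presburger
  also have "\<dots> \<longleftrightarrow> (\<exists>s u. s * (mdet N1 C1 + int k * Delta N1 C1 \<xi>1) =
        awX N1 C1 \<xi>1 adj1 k (\<lambda>v. w (Inl v)) + (mdet (N1 - {\<xi>1}) C1 + int k * Delta N1 C1 \<xi>1) * u
      \<and> mdet N2 C2 * u = (\<Sum>b\<in>N2. adj2 \<xi>2 b * w (Inr b)) + mdet (N2 - {\<xi>2}) C2 * s)"
    using awX_shift[OF fin1 k, of C1 \<xi>1 adj1 "\<lambda>v. w (Inl v)"] nu2 by (simp add: algebra_simps)
  finally show ?thesis .
qed

lemma supp_bound:
  assumes "x \<in> H1" "x i \<noteq> 0"
  shows "1 \<le> i \<and> i \<le> seq_len x"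
proof -
  have fin: "finite {i. x i \<noteq> 0}" and x0: "x 0 = 0" using assms(1) by (auto simp: H1_def)
  have "i \<noteq> 0" using x0 assms(2) by (cases "i = 0") auto
  moreover have "i \<le> Max (insert 0 {i. x i \<noteq> 0})" using fin assms(2) by (intro Max_ge) auto
  ultimately show ?thesis by (simp add: seq_len_def)
qed

lemma sum_supp:
  assumes "x \<in> H1" "\<forall>i. x i \<noteq> 0 \<longrightarrow> i \<le> n"
  shows "(\<Sum>i\<in>{i. x i \<noteq> 0}. x i * a i) = (\<Sum>i\<in>{1..n}. x i * a i)"
proof (rule sum.mono_neutral_left)
  show "{i. x i \<noteq> 0} \<subseteq> {1..n}" using assms supp_bound[OF assms(1)] by fastforce
qed auto

lemma sum_split_nat: "(\<Sum>i\<in>{1..(a::nat)+b}. f i) = (\<Sum>i\<in>{1..a}. f i) + (\<Sum>t\<in>{1..b}. f (a + t))"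
proof (induction b)
  case 0 thus ?case by simp
next
  case (Suc b)
  have "(\<Sum>i\<in>{1..a + Suc b}. f i) = (\<Sum>i\<in>{1..a+b}. f i) + f (a + Suc b)" by simp
  moreover have "(\<Sum>t\<in>{1..Suc b}. f (a + t)) = (\<Sum>t\<in>{1..b}. f (a + t)) + f (a + Suc b)" by simp
  ultimately show ?case using Suc by (simp add: add.assoc)
qed

lemma sum_num:
  assumes "numbering N \<xi> \<epsilon>"
  shows "(\<Sum>i\<in>{1..card N}. g i) = (\<Sum>p\<in>N. g (\<epsilon> p))"
  using assms unfolding numbering_def by (metis sum.reindex_bij_betw)

lemma astar_low:
  assumes "numbering N \<xi> \<epsilon>" "p \<in> N"
  shows "astar N C \<xi> \<epsilon> adj (\<epsilon> p) = adj \<xi> p"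
proof -
  have b: "bij_betw \<epsilon> N {1..card N}" using assms by (simp add: numbering_def)
  have ep: "\<epsilon> p \<in> {1..card N}" using b assms by (auto simp: bij_betw_def)
  have "inv_into N \<epsilon> (\<epsilon> p) = p" using b assms by (simp add: bij_betw_inv_into_left)
  thus ?thesis using ep by (simp add: astar_def)
qed

lemma astar_high:
  assumes "1 \<le> t"
  shows "astar N C \<xi> \<epsilon> adj (card N + t) = mdet (N - {\<xi>}) C + int t * Delta N C \<xi>"
  using assms by (simp add: astar_def)

lemma eps_range: "numbering N \<xi> \<epsilon> \<Longrightarrow> p \<in> N \<Longrightarrow> 1 \<le> \<epsilon> p \<and> \<epsilon> p \<le> card N"
  by (auto simp: numbering_def bij_betw_def)

lemma BOX:
  fixes C1 :: "'a \<Rightarrow> 'a \<Rightarrow> int" and C2 :: "'b \<Rightarrow> 'b \<Rightarrow> int" and \<xi>1 :: 'a and \<xi>2 :: 'b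
    and adj1 :: "'a \<Rightarrow> 'a \<Rightarrow> int" and adj2 :: "'b \<Rightarrow> 'b \<Rightarrow> int"
  assumes fin1: "finite N1" and fin2: "finite N2"
    and num1: "numbering N1 \<xi>1 \<epsilon>1" and num2: "numbering N2 \<xi>2 \<epsilon>2"
    and x: "x \<in> H1" and y: "y \<in> H1"
    and hx: "\<forall>i. x i \<noteq> 0 \<longrightarrow> i \<le> card N1 + k" and hy: "\<forall>i. y i \<noteq> 0 \<longrightarrow> i \<le> card N2 + k"
  defines "w \<equiv> gamma_k \<epsilon>1 (card N1) \<epsilon>2 (card N2) x y k"
    and "L1 \<equiv> Delta N1 C1 \<xi>1" and "L2 \<equiv> Delta N2 C2 \<xi>2"
    and "D1' \<equiv> mdet (N1 - {\<xi>1}) C1" and "D2' \<equiv> mdet (N2 - {\<xi>2}) C2"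
  shows "L2 * awX N1 C1 \<xi>1 adj1 k (\<lambda>v. w (Inl v)) - L1 * (\<Sum>b\<in>N2. adj2 \<xi>2 b * w (Inr b))
    = L2 * (\<Sum>i\<in>{i. x i \<noteq> 0}. x i * astar N1 C1 \<xi>1 \<epsilon>1 adj1 i)
      - L1 * (\<Sum>i\<in>{i. y i \<noteq> 0}. y i * astar N2 C2 \<xi>2 \<epsilon>2 adj2 i)
      + (L2 * D1' + L1 * D2' + int (Suc k) * L1 * L2) * (\<Sum>t\<in>{1..k}. y (card N2 + k + 1 - t))"
proof -
  define d1 where "d1 = card N1"
  define d2 where "d2 = card N2"
  have wl: "w (Inl (Inl p)) = x (\<epsilon>1 p)" if p: "p \<in> N1" for p
  proof -
    have "y (d1 + d2 + k + 1 - \<epsilon>1 p) = 0" using hy eps_range[OF num1 p] by (force simp: d1_def d2_def)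
    thus ?thesis by (simp add: w_def gamma_k_def Z_num_def Z_numbar_def d1_def d2_def)
  qed
  have wr: "w (Inr b) = y (\<epsilon>2 b)" if b: "b \<in> N2" for b
  proof -
    have "x (d1 + d2 + k + 1 - \<epsilon>2 b) = 0" using hx eps_range[OF num2 b] by (force simp: d1_def d2_def)
    thus ?thesis by (simp add: w_def gamma_k_def Z_num_def Z_numbar_def d1_def d2_def)
  qed
  have wp: "w (Inl (Inr t)) = x (d1 + t) + y (d2 + k + 1 - t)" for t
    by (simp add: w_def gamma_k_def Z_num_def Z_numbar_def d1_def d2_def)
  define SX where "SX = (\<Sum>i\<in>{i. x i \<noteq> 0}. x i * astar N1 C1 \<xi>1 \<epsilon>1 adj1 i)"
  define SY where "SY = (\<Sum>i\<in>{i. y i \<noteq> 0}. y i * astar N2 C2 \<xi>2 \<epsilon>2 adj2 i)"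
  have SX: "SX = (\<Sum>p\<in>N1. adj1 \<xi>1 p * x (\<epsilon>1 p)) + (\<Sum>t\<in>{1..k}. (D1' + int t * L1) * x (d1 + t))"
  proof -
    have "SX = (\<Sum>i\<in>{1..d1+k}. x i * astar N1 C1 \<xi>1 \<epsilon>1 adj1 i)"
      unfolding SX_def by (rule sum_supp[OF x]) (use hx in \<open>simp add: d1_def\<close>)
    also have "\<dots> = (\<Sum>i\<in>{1..d1}. x i * astar N1 C1 \<xi>1 \<epsilon>1 adj1 i) + (\<Sum>t\<in>{1..k}. x (d1 + t) * astar N1 C1 \<xi>1 \<epsilon>1 adj1 (d1 + t))"
      by (rule sum_split_nat)
    also have "(\<Sum>i\<in>{1..d1}. x i * astar N1 C1 \<xi>1 \<epsilon>1 adj1 i) = (\<Sum>p\<in>N1. adj1 \<xi>1 p * x (\<epsilon>1 p))"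
      unfolding d1_def sum_num[OF num1] by (rule sum.cong) (auto simp: astar_low[OF num1])
    also have "(\<Sum>t\<in>{1..k}. x (d1 + t) * astar N1 C1 \<xi>1 \<epsilon>1 adj1 (d1 + t)) = (\<Sum>t\<in>{1..k}. (D1' + int t * L1) * x (d1 + t))"
      unfolding d1_def by (rule sum.cong) (auto simp: astar_high D1'_def L1_def)
    finally show ?thesis .
  qed
  have SY: "SY = (\<Sum>b\<in>N2. adj2 \<xi>2 b * y (\<epsilon>2 b)) + (\<Sum>t\<in>{1..k}. (D2' + int t * L2) * y (d2 + t))"
  proof -
    have "SY = (\<Sum>i\<in>{1..d2+k}. y i * astar N2 C2 \<xi>2 \<epsilon>2 adj2 i)"
      unfolding SY_def by (rule sum_supp[OF y]) (use hy in \<open>simp add: d2_def\<close>)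
    also have "\<dots> = (\<Sum>i\<in>{1..d2}. y i * astar N2 C2 \<xi>2 \<epsilon>2 adj2 i) + (\<Sum>t\<in>{1..k}. y (d2 + t) * astar N2 C2 \<xi>2 \<epsilon>2 adj2 (d2 + t))"
      by (rule sum_split_nat)
    also have "(\<Sum>i\<in>{1..d2}. y i * astar N2 C2 \<xi>2 \<epsilon>2 adj2 i) = (\<Sum>b\<in>N2. adj2 \<xi>2 b * y (\<epsilon>2 b))"
      unfolding d2_def sum_num[OF num2] by (rule sum.cong) (auto simp: astar_low[OF num2])
    also have "(\<Sum>t\<in>{1..k}. y (d2 + t) * astar N2 C2 \<xi>2 \<epsilon>2 adj2 (d2 + t)) = (\<Sum>t\<in>{1..k}. (D2' + int t * L2) * y (d2 + t))"
      unfolding d2_def by (rule sum.cong) (auto simp: astar_high D2'_def L2_def)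
    finally show ?thesis .
  qed
  have A: "awX N1 C1 \<xi>1 adj1 k (\<lambda>v. w (Inl v)) = (\<Sum>p\<in>N1. adj1 \<xi>1 p * x (\<epsilon>1 p))
      + (\<Sum>t\<in>{1..k}. (D1' + int t * L1) * x (d1 + t)) + (\<Sum>t\<in>{1..k}. (D1' + int t * L1) * y (d2 + k + 1 - t))"
  proof -
    have "(\<Sum>p\<in>N1. adj1 \<xi>1 p * w (Inl (Inl p))) = (\<Sum>p\<in>N1. adj1 \<xi>1 p * x (\<epsilon>1 p))"
      by (rule sum.cong) (auto simp: wl)
    moreover have "(\<Sum>t\<in>{1..k}. (D1' + int t * L1) * w (Inl (Inr t))) =
       (\<Sum>t\<in>{1..k}. (D1' + int t * L1) * x (d1 + t)) + (\<Sum>t\<in>{1..k}. (D1' + int t * L1) * y (d2 + k + 1 - t))"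
      unfolding wp by (simp add: sum.distrib[symmetric] distrib_left)
    ultimately show ?thesis by (simp add: awX_def D1'_def L1_def)
  qed
  have B: "(\<Sum>b\<in>N2. adj2 \<xi>2 b * w (Inr b)) = (\<Sum>b\<in>N2. adj2 \<xi>2 b * y (\<epsilon>2 b))"
    by (rule sum.cong) (auto simp: wr)
  have rev: "(\<Sum>t\<in>{1..k}. (D2' + int t * L2) * y (d2 + t)) =
      (\<Sum>t\<in>{1..k}. (D2' + int (k + 1 - t) * L2) * y (d2 + k + 1 - t))"
  proof -
    have "(\<Sum>t\<in>{1..k}. (D2' + int t * L2) * y (d2 + t)) =
          (\<Sum>t\<in>{1..k}. (D2' + int (k + 1 - t) * L2) * y (d2 + (k + 1 - t)))"
      by (subst sum.atLeastAtMost_rev) simp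
    also have "\<dots> = (\<Sum>t\<in>{1..k}. (D2' + int (k + 1 - t) * L2) * y (d2 + k + 1 - t))"
      by (rule sum.cong) auto
    finally show ?thesis .
  qed
  have comb: "L2 * (\<Sum>t\<in>{1..k}. (D1' + int t * L1) * y (d2 + k + 1 - t))
       + L1 * (\<Sum>t\<in>{1..k}. (D2' + int (k + 1 - t) * L2) * y (d2 + k + 1 - t))
     = (L2 * D1' + L1 * D2' + int (Suc k) * L1 * L2) * (\<Sum>t\<in>{1..k}. y (d2 + k + 1 - t))"
  proof -
    have "L2 * (\<Sum>t\<in>{1..k}. (D1' + int t * L1) * y (d2 + k + 1 - t))
       + L1 * (\<Sum>t\<in>{1..k}. (D2' + int (k + 1 - t) * L2) * y (d2 + k + 1 - t))
       = (\<Sum>t\<in>{1..k}. (L2 * (D1' + int t * L1) + L1 * (D2' + int (k + 1 - t) * L2)) * y (d2 + k + 1 - t))"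
      by (simp add: sum_distrib_left sum.distrib[symmetric] algebra_simps)
    also have "\<dots> = (\<Sum>t\<in>{1..k}. (L2 * D1' + L1 * D2' + int (Suc k) * L1 * L2) * y (d2 + k + 1 - t))"
      by (rule sum.cong) (auto simp: of_nat_diff algebra_simps)
    finally show ?thesis by (simp add: sum_distrib_left)
  qed
  show ?thesis
    unfolding SX_def[symmetric] SY_def[symmetric] SX SY A B rev using comb
    by (simp add: d2_def algebra_simps)
qed

lemma ext_cop:
  assumes "extensible N C \<xi>"
  shows "coprime (mdet N C) (mdet (N - {\<xi>}) C)"
proof -
  have g: "gcd (mdet N C) (Delta N C \<xi>) = 1" using assms by (simp add: extensible_def)
  show ?thesis
    using coprime_shift[of "mdet N C" "Delta N C \<xi>" "mdet (N - {\<xi>}) C" 0] g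
    by (simp add: coprime_iff_gcd_eq_1 Delta_def)
qed

lemma dvd_small:
  fixes d b :: int
  assumes "d dvd b" "\<bar>d\<bar> > \<bar>b\<bar>"
  shows "b = 0"
  using assms dvd_imp_le_int[of b d] by force

theorem corollary4p4:
  fixes N1 :: "'a set" and C1 :: "'a \<Rightarrow> 'a \<Rightarrow> int" and \<xi>1 :: 'a and \<epsilon>1 :: "'a \<Rightarrow> nat"
    and N2 :: "'b set" and C2 :: "'b \<Rightarrow> 'b \<Rightarrow> int" and \<xi>2 :: 'b and \<epsilon>2 :: "'b \<Rightarrow> nat"
    and x y :: "nat \<Rightarrow> int"
  assumes "marked_diagram N1 C1 \<xi>1" and "marked_diagram N2 C2 \<xi>2"
    and "numbering N1 \<xi>1 \<epsilon>1" and "numbering N2 \<xi>2 \<epsilon>2"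
    and "extensible_pair N1 C1 \<xi>1 N2 C2 \<xi>2"
    and "x \<in> H1" and "y \<in> H1"
  shows "(boxes N1 C1 \<xi>1 \<epsilon>1 N2 C2 \<xi>2 \<epsilon>2 x y = 0
          \<longleftrightarrow> (\<exists>K. \<forall>k\<ge>K. gamma_len (card N1) (card N2) x y \<le> card N1 + card N2 + k \<longrightarrow>
                  in_root_lattice (Z_nodes N1 N2 k) (Z_mat C1 \<xi>1 C2 \<xi>2 k)
                    (gamma_k \<epsilon>1 (card N1) \<epsilon>2 (card N2) x y k)))
       \<and> (boxes N1 C1 \<xi>1 \<epsilon>1 N2 C2 \<xi>2 \<epsilon>2 x y = 0
          \<longleftrightarrow> infinite {k. gamma_len (card N1) (card N2) x y \<le> card N1 + card N2 + k \<and>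
                  in_root_lattice (Z_nodes N1 N2 k) (Z_mat C1 \<xi>1 C2 \<xi>2 k)
                    (gamma_k \<epsilon>1 (card N1) \<epsilon>2 (card N2) x y k)})"
proof -
  note md1 = assms(1) and md2 = assms(2) and num1 = assms(3) and num2 = assms(4)
    and ep = assms(5) and x = assms(6) and y = assms(7)
  have fin1: "finite N1" and xi1: "\<xi>1 \<in> N1"
    using md1 by (auto simp: marked_diagram_def sym_gcm_def gcm_def)
  have fin2: "finite N2" and xi2: "\<xi>2 \<in> N2"
    using md2 by (auto simp: marked_diagram_def sym_gcm_def gcm_def)
  have ext1: "extensible N1 C1 \<xi>1" and ext2: "extensible N2 C2 \<xi>2"
    and g12: "gcd (Delta N1 C1 \<xi>1) (Delta N2 C2 \<xi>2) = 1"
    using ep by (auto simp: extensible_pair_def)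
  obtain adj1 where ap1: "adjprops N1 C1 \<xi>1 adj1" using adjprops_exists[OF fin1 xi1] by blast
  obtain adj2 where ap2: "adjprops N2 C2 \<xi>2 adj2" using adjprops_exists[OF fin2 xi2] by blast
  have D10: "mdet N1 C1 \<noteq> 0" and L10: "Delta N1 C1 \<xi>1 \<noteq> 0" using ext1 by (auto simp: extensible_def)
  have D20: "mdet N2 C2 \<noteq> 0" and L20: "Delta N2 C2 \<xi>2 \<noteq> 0" using ext2 by (auto simp: extensible_def)
  have cop1: "coprime (mdet N1 C1) (mdet (N1 - {\<xi>1}) C1)" by (rule ext_cop[OF ext1])
  have cop2: "coprime (mdet N2 C2) (mdet (N2 - {\<xi>2}) C2)" by (rule ext_cop[OF ext2])
  have cop12: "coprime (Delta N1 C1 \<xi>1) (Delta N2 C2 \<xi>2)" using g12 by (simp add: coprime_iff_gcd_eq_1)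
  have as1: "a_seq N1 C1 \<xi>1 \<epsilon>1 = astar N1 C1 \<xi>1 \<epsilon>1 adj1" by (rule a_seq_eq[OF ap1 fin1 xi1 ext1 num1])
  have as2: "a_seq N2 C2 \<xi>2 \<epsilon>2 = astar N2 C2 \<xi>2 \<epsilon>2 adj2" by (rule a_seq_eq[OF ap2 fin2 xi2 ext2 num2])
  define bx where "bx = boxes N1 C1 \<xi>1 \<epsilon>1 N2 C2 \<xi>2 \<epsilon>2 x y"
  define G where "G = gamma_len (card N1) (card N2) x y"
  define L1 where "L1 = Delta N1 C1 \<xi>1"
  define L2 where "L2 = Delta N2 C2 \<xi>2"
  define D1 where "D1 = mdet N1 C1"
  define D1' where "D1' = mdet (N1 - {\<xi>1}) C1"
  define D2 where "D2 = mdet N2 C2"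
  define D2' where "D2' = mdet (N2 - {\<xi>2}) C2"
  have l1: "L1 = D1 - D1'" by (simp add: L1_def D1_def D1'_def Delta_def)
  have l2: "L2 = D2 - D2'" by (simp add: L2_def D2_def D2'_def Delta_def)
  define dl where "dl = (\<lambda>k::nat. L2 * (D1 + int k * L1) + L1 * D2')"
  define M where "M = (\<lambda>k. in_root_lattice (Z_nodes N1 N2 k) (Z_mat C1 \<xi>1 C2 \<xi>2 k)
                    (gamma_k \<epsilon>1 (card N1) \<epsilon>2 (card N2) x y k))"
  have bxe: "bx = L2 * (\<Sum>i\<in>{i. x i \<noteq> 0}. x i * astar N1 C1 \<xi>1 \<epsilon>1 adj1 i)
      - L1 * (\<Sum>i\<in>{i. y i \<noteq> 0}. y i * astar N2 C2 \<xi>2 \<epsilon>2 adj2 i)"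
    by (simp add: bx_def boxes_def as1 as2 L1_def L2_def)
  have KEY: "M k \<longleftrightarrow> dl k dvd bx" if k: "1 \<le> k" and G: "G \<le> card N1 + card N2 + k" for k
  proof -
    have hx: "\<forall>i. x i \<noteq> 0 \<longrightarrow> i \<le> card N1 + k"
    proof (intro allI impI)
      fix i assume "x i \<noteq> 0"
      hence "i \<le> seq_len x" using supp_bound[OF x] by blast
      thus "i \<le> card N1 + k" using G by (simp add: G_def gamma_len_def)
    qed
    have hy: "\<forall>i. y i \<noteq> 0 \<longrightarrow> i \<le> card N2 + k"
    proof (intro allI impI)
      fix i assume "y i \<noteq> 0"
      hence "i \<le> seq_len y" using supp_bound[OF y] by blast
      thus "i \<le> card N2 + k" using G by (simp add: G_def gamma_len_def)
    qed
    let ?w = "gamma_k \<epsilon>1 (card N1) \<epsilon>2 (card N2) x y k"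
    let ?A = "awX N1 C1 \<xi>1 adj1 k (\<lambda>v. ?w (Inl v))"
    let ?B = "\<Sum>b\<in>N2. adj2 \<xi>2 b * ?w (Inr b)"
    have "M k \<longleftrightarrow> (\<exists>s u. s * (D1 + int k * L1) = ?A + (D1' + int k * L1) * u \<and> D2 * u = ?B + D2' * s)"
      unfolding M_def D1_def L1_def D1'_def D2_def D2'_def
      by (rule ZM[OF ap1 fin1 xi1 D10 cop1 ap2 fin2 xi2 D20 cop2 k])
    also have "\<dots> \<longleftrightarrow> dl k dvd (L2 * ?A - L1 * ?B)"
      unfolding dl_def by (rule sys2[OF l1 l2 _ L10[folded L1_def]]) (simp add: cop12 L1_def L2_def)
    also have "L2 * ?A - L1 * ?B = bx + dl k * (\<Sum>t\<in>{1..k}. y (card N2 + k + 1 - t))"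
    proof -
      have "L2 * ?A - L1 * ?B = L2 * (\<Sum>i\<in>{i. x i \<noteq> 0}. x i * astar N1 C1 \<xi>1 \<epsilon>1 adj1 i)
        - L1 * (\<Sum>i\<in>{i. y i \<noteq> 0}. y i * astar N2 C2 \<xi>2 \<epsilon>2 adj2 i)
        + (L2 * D1' + L1 * D2' + int (Suc k) * L1 * L2) * (\<Sum>t\<in>{1..k}. y (card N2 + k + 1 - t))"
        unfolding L1_def L2_def D1'_def D2'_def by (rule BOX[OF fin1 fin2 num1 num2 x y hx hy])
      also have "L2 * D1' + L1 * D2' + int (Suc k) * L1 * L2 = dl k"
        by (simp add: dl_def l1 algebra_simps)
      finally show ?thesis using bxe by simp
    qed
    also have "dl k dvd bx + dl k * (\<Sum>t\<in>{1..k}. y (card N2 + k + 1 - t)) \<longleftrightarrow> dl k dvd bx"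
      by (simp add: dvd_add_left_iff)
    finally show ?thesis .
  qed
  define Kb where "Kb = nat (\<bar>L2 * D1 + L1 * D2'\<bar> + \<bar>bx\<bar>) + 1"
  have big: "\<bar>dl k\<bar> > \<bar>bx\<bar>" if "k \<ge> Kb" for k
  proof -
    have "\<bar>L1 * L2\<bar> \<ge> 1" using L10 L20 by (simp add: L1_def L2_def abs_mult) (metis abs_mult int_one_le_iff_zero_less mult_eq_0_iff zero_less_abs_iff)
    hence "int k * 1 \<le> int k * \<bar>L1 * L2\<bar>" by (intro mult_left_mono) auto
    hence "\<bar>int k * (L1 * L2)\<bar> \<ge> int k" by (simp add: abs_mult)
    moreover have "dl k = (L2 * D1 + L1 * D2') + int k * (L1 * L2)" by (simp add: dl_def algebra_simps)
    moreover have "int k \<ge> \<bar>L2 * D1 + L1 * D2'\<bar> + \<bar>bx\<bar> + 1" using that by (simp add: Kb_def)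
    ultimately show ?thesis by linarith
  qed
  have zero: "bx = 0" if "k \<ge> Kb" "1 \<le> k" "G \<le> card N1 + card N2 + k" "M k" for k
    using KEY[OF that(2,3)] that(4) big[OF that(1)] dvd_small by blast
  have P1: "bx = 0 \<longleftrightarrow> (\<exists>K. \<forall>k\<ge>K. G \<le> card N1 + card N2 + k \<longrightarrow> M k)"
  proof
    assume "bx = 0"
    hence "\<forall>k\<ge>1. G \<le> card N1 + card N2 + k \<longrightarrow> M k" using KEY by simp
    thus "\<exists>K. \<forall>k\<ge>K. G \<le> card N1 + card N2 + k \<longrightarrow> M k" by blast
  next
    assume "\<exists>K. \<forall>k\<ge>K. G \<le> card N1 + card N2 + k \<longrightarrow> M k"
    then obtain K where K: "\<forall>k\<ge>K. G \<le> card N1 + card N2 + k \<longrightarrow> M k" by blast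
    define k where "k = K + Kb + G + 1"
    show "bx = 0" by (rule zero[of k]) (use K in \<open>auto simp: k_def\<close>)
  qed
  have P2: "bx = 0 \<longleftrightarrow> infinite {k. G \<le> card N1 + card N2 + k \<and> M k}"
  proof
    assume "bx = 0"
    hence h: "\<forall>k\<ge>1. G \<le> card N1 + card N2 + k \<longrightarrow> M k" using KEY by simp
    have "{G + 1..} \<subseteq> {k. G \<le> card N1 + card N2 + k \<and> M k}" using h by auto
    moreover have "infinite {G + 1..}" by (rule infinite_Ici)
    ultimately show "infinite {k. G \<le> card N1 + card N2 + k \<and> M k}" using infinite_super by blast
  next
    assume "infinite {k. G \<le> card N1 + card N2 + k \<and> M k}"
    then obtain k where "k \<ge> Kb + 1" "k \<in> {k. G \<le> card N1 + card N2 + k \<and> M k}"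
      using infinite_nat_iff_unbounded_le by blast
    thus "bx = 0" using zero[of k] by auto
  qed
  show ?thesis using P1 P2 unfolding bx_def G_def M_def by blast
qed

end
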